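(* Let $f:2^V\to\mathbb R_{\ge0}$ be a (not necessarily monotone) submodular function, let $P_1,\dots,P_k$ be a partition of $V$ with budgets $n_1,\dots,n_k$, and let $S^*$ maximize $f$ over sets $S\subseteq V$ with $|S\cap P_a|\le n_a$ for all $a$. Run Algorithm 4 with sampling probability $p\in(0,1)$ and parameters $d_a>0$. Let $$Q_a=\max\Big\{1+c_a+d_a,\ \Big(1-\frac1{n_a}\Big)c_a+\frac1p\Big\},\qquad Q=\max_{a\in[k]}Q_a.$$ Then $\mathbb E[f(S)]\ge\frac{1-p}{Q}\,f(S^* )$ for the output $S$.
   Context: Algorithm 4. The elements of $V$ are labeled $1,\dots,m$ in arbitrary arrival order. Given $p\in(0,1)$ and $d_a>0$, set $c_a=(1+d_a)/\big((1+d_a/n_a)^{n_a}-1\big)$ and $g_a(i)=\frac{c_a}{n_a}(1+d_a/n_a)^{i-1}$ for $i\in[n_a]$. Maintain $S$, initially $\emptyset$, and thresholds $\beta_a=0$. For $t=1,\dots,m$: let $a$ be the index with $t\in P_a$, compute $w_t=f(S\cup\{t\})-f(S)$ (for the current $S$), and draw $Z_t\sim\mathrm{Bernoulli}(p)$ independently of everything else; if $w_t\ge\beta_a$ and $Z_t=1$, then: if $|S\cap P_a|<n_a$ add $t$ to $S$, otherwise remove from $S$ an element $t'\in S\cap P_a$ minimizing $w_{t'}$ and add $t$; then set $\beta_a=\sum_{i=1}^{n_a}w_a(i)g_a(i)$, where $w_a(i)$ is the $i$-th largest value in $\{w_s:s\in S\cap P_a\}$ ($0$ if $i>|S\cap P_a|$).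 Weights are never recomputed. Otherwise $t$ is discarded. Output the final $S$. *)

theory Defs
  imports "HOL-Probability.Probability"
begin

text \<open>Ground set V = {1..m}; partition blocks P a for a in {1..k}; budgets n a; parameters d a.\<close>

definition c_par :: "real \<Rightarrow> nat \<Rightarrow> real" where
  "c_par d n = (1 + d) / ((1 + d / real n) ^ n - 1)"

definition g_par :: "real \<Rightarrow> nat \<Rightarrow> nat \<Rightarrow> real" where
  "g_par d n i = c_par d n / real n * (1 + d / real n) ^ (i - 1)"

text \<open>i-th largest value (1-indexed) of the multiset of weights of a finite set A; 0 if i > card A.\<close>
definition ith_largest :: "(nat \<Rightarrow> real) \<Rightarrow> nat set \<Rightarrow> nat \<Rightarrow> real" where
  "ith_largest w A i =
     (let L = rev (sort (map w (sorted_list_of_set A))) in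
      if 1 \<le> i \<and> i \<le> length L then L ! (i - 1) else 0)"

definition threshold :: "real \<Rightarrow> nat \<Rightarrow> (nat \<Rightarrow> real) \<Rightarrow> nat set \<Rightarrow> real" where
  "threshold d n w A = (\<Sum>i=1..n. ith_largest w A i * g_par d n i)"

definition block_of :: "(nat \<Rightarrow> nat set) \<Rightarrow> nat \<Rightarrow> nat \<Rightarrow> nat" where
  "block_of P k t = (THE a. a \<in> {1..k} \<and> t \<in> P a)"

text \<open>One step of Algorithm 4. State: (S, recorded weights w, thresholds beta).
  tb S w t is the (arbitrary) tie-breaking rule choosing the element to evict.\<close>
definition alg_step ::
  "(nat set \<Rightarrow> real) \<Rightarrow> (nat \<Rightarrow> nat set) \<Rightarrow> nat \<Rightarrow> (nat \<Rightarrow> nat) \<Rightarrow> (nat \<Rightarrow> real)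
   \<Rightarrow> (nat set \<Rightarrow> (nat \<Rightarrow> real) \<Rightarrow> nat \<Rightarrow> nat) \<Rightarrow> (nat \<Rightarrow> bool)
   \<Rightarrow> nat \<Rightarrow> nat set \<times> (nat \<Rightarrow> real) \<times> (nat \<Rightarrow> real) \<Rightarrow> nat set \<times> (nat \<Rightarrow> real) \<times> (nat \<Rightarrow> real)"
  where
  "alg_step f P k n d tb Z t st =
     (case st of (S, w, \<beta>) \<Rightarrow>
       (let a = block_of P k t;
            wt = f (S \<union> {t}) - f S
        in if wt \<ge> \<beta> a \<and> Z t then
             (let w' = w(t := wt);
                  S' = (if card (S \<inter> P a) < n a then insert t S
                        else insert t (S - {tb S w t}))
              in (S', w', \<beta>(a := threshold (d a) (n a) w' (S' \<inter> P a))))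
           else (S, w, \<beta>)))"

definition alg_output ::
  "(nat set \<Rightarrow> real) \<Rightarrow> (nat \<Rightarrow> nat set) \<Rightarrow> nat \<Rightarrow> (nat \<Rightarrow> nat) \<Rightarrow> (nat \<Rightarrow> real)
   \<Rightarrow> (nat set \<Rightarrow> (nat \<Rightarrow> real) \<Rightarrow> nat \<Rightarrow> nat) \<Rightarrow> nat \<Rightarrow> (nat \<Rightarrow> bool) \<Rightarrow> nat set"
  where
  "alg_output f P k n d tb m Z =
     fst (fold (alg_step f P k n d tb Z) [1..<m+1] ({}, (\<lambda>_. 0), (\<lambda>_. 0)))"

definition submodular_on :: "'a set \<Rightarrow> ('a set \<Rightarrow> real) \<Rightarrow> bool" where
  "submodular_on V f \<longleftrightarrow>
     (\<forall>A B. A \<subseteq> V \<longrightarrow> B \<subseteq> V \<longrightarrow> f (A \<union> B) + f (A \<inter> B) \<le> f A + f B)"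

definition Q_par :: "real \<Rightarrow> real \<Rightarrow> nat \<Rightarrow> real" where
  "Q_par p d n = max (1 + c_par d n + d) ((1 - 1 / real n) * c_par d n + 1 / p)"

end

theory Submission
  imports Defs
begin


definition Bv :: "real \<Rightarrow> nat \<Rightarrow> real list \<Rightarrow> real" where
  "Bv d n V = (\<Sum>i<n. V ! i * g_par d n (i+1))"

lemma g_eq: "g_par d n (Suc i) = c_par d n / real n * (1 + d / real n) ^ i"
  by (simp add: g_par_def)

lemma c_rel:
  assumes "n \<ge> 1" "d > 0"
  shows "c_par d n * (1 + d / real n) ^ n = 1 + c_par d n + d"
    and "c_par d n > 0"
proof -
  have r1: "(1 + d / real n) > 1" using assms by simp
  have "(1 + d / real n) ^ n > 1" using r1 assms by (simp add: one_less_power)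
  then have pos: "(1 + d / real n) ^ n - 1 > 0" by simp
  show "c_par d n * (1 + d / real n) ^ n = 1 + c_par d n + d"
    using pos by (simp add: c_par_def field_simps)
  show "c_par d n > 0" using pos assms by (simp add: c_par_def)
qed

lemma gsum:
  assumes "n \<ge> 1" "d > 0"
  shows "d * (\<Sum>i<k. g_par d n (i+1)) = c_par d n * ((1 + d / real n) ^ k - 1)"
proof -
  define r where "r = 1 + d / real n"
  have ne: "r \<noteq> 1" using assms by (simp add: r_def)
  have G: "(\<Sum>i<k. g_par d n (i+1)) = c_par d n / real n * (\<Sum>i<k. r ^ i)"
    by (simp add: g_eq sum_distrib_left r_def)
  have gp: "(\<Sum>i<k. r ^ i) * (r - 1) = r ^ k - 1"
    using ne by (simp add: sum_gp_strict field_simps)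
  have "d / real n = r - 1" by (simp add: r_def)
  have "d * (\<Sum>i<k. g_par d n (i+1)) = c_par d n * ((\<Sum>i<k. r ^ i) * (d / real n))"
    unfolding G by (simp add: algebra_simps)
  then have "d * (\<Sum>i<k. g_par d n (i+1)) = c_par d n * ((\<Sum>i<k. r ^ i) * (r - 1))"
    using \<open>d / real n = r - 1\<close> by simp
  then have "d * (\<Sum>i<k. g_par d n (i+1)) = c_par d n * (r ^ k - 1)"
    using gp by simp
  then show ?thesis unfolding r_def .
qed

lemma g_nonneg: "n \<ge> 1 \<Longrightarrow> d > 0 \<Longrightarrow> g_par d n i \<ge> 0"
  using c_rel(2)[of n d] by (simp add: g_par_def)

lemma g_mono: assumes "n \<ge> 1" "d > 0" "i \<le> j" shows "g_par d n (i+1) \<le> g_par d n (j+1)"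
proof -
  have "(1 + d / real n) ^ i \<le> (1 + d / real n) ^ j" using assms by (intro power_increasing) auto
  then show ?thesis using c_rel(2)[of n d] assms by (simp add: g_eq divide_right_mono mult_left_mono)
qed

lemma sorted_desc_unique:
  fixes xs ys :: "real list"
  assumes "sorted_wrt (\<ge>) xs" "sorted_wrt (\<ge>) ys" "mset xs = mset ys"
  shows "xs = ys"
proof -
  have "sorted (rev xs)" "sorted (rev ys)" using assms by (simp_all add: sorted_wrt_rev)
  moreover have "mset (rev xs) = mset (rev ys)" using assms by simp
  ultimately have "sort (rev ys) = rev xs" "sort (rev ys) = rev ys"
    by (metis properties_for_sort)+
  then show ?thesis by simp
qed

lemma sum_split3:
  fixes h :: "nat \<Rightarrow> real"
  assumes "k < n"
  shows "(\<Sum>i<n. h i) = (\<Sum>i<k. h i) + h k + (\<Sum>j\<in>{k..<n-1}. h (Suc j))"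
proof -
  have "(\<Sum>i<n. h i) = (\<Sum>i\<in>{0..<k}. h i) + (\<Sum>i\<in>{k..<n}. h i)"
    using assms by (simp add: lessThan_atLeast0 sum.atLeastLessThan_concat)
  also have "(\<Sum>i\<in>{k..<n}. h i) = h k + (\<Sum>i\<in>{Suc k..<n}. h i)"
    using assms by (simp add: sum.atLeast_Suc_lessThan)
  also have "(\<Sum>i\<in>{Suc k..<n}. h i) = (\<Sum>j\<in>{k..<n-1}. h (Suc j))"
  proof -
    have "n = Suc (n-1)" using assms by simp
    then have "(\<Sum>i\<in>{Suc k..<n}. h i) = (\<Sum>i\<in>{Suc k..<Suc (n-1)}. h i)" by simp
    also have "\<dots> = (\<Sum>j\<in>{k..<n-1}. h (Suc j))" by (rule sum.shift_bounds_Suc_ivl)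
    finally show ?thesis .
  qed
  finally show ?thesis by (simp add: lessThan_atLeast0)
qed

lemma sum_split2:
  fixes h :: "nat \<Rightarrow> real"
  assumes "k < n"
  shows "(\<Sum>i<n. h i) = (\<Sum>i<k. h i) + (\<Sum>j\<in>{k..<n-1}. h j) + h (n-1)"
proof -
  have n: "n = Suc (n-1)" using assms by simp
  have "(\<Sum>i<n. h i) = (\<Sum>i<n-1. h i) + h (n-1)" by (subst n) simp
  moreover have "(\<Sum>i<n-1. h i) = (\<Sum>i\<in>{0..<k}. h i) + (\<Sum>i\<in>{k..<n-1}. h i)"
    using assms by (simp add: lessThan_atLeast0 sum.atLeastLessThan_concat)
  ultimately show ?thesis by (simp add: lessThan_atLeast0)
qed

lemma core:
  fixes V V' :: "real list" and x d :: real and n :: nat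
  assumes n: "n \<ge> 1" and d: "d > 0" and len: "length V = n"
    and sV: "sorted_wrt (\<ge>) V" and nn: "\<forall>v\<in>set V. 0 \<le> v"
    and x: "x \<ge> Bv d n V"
    and mV': "mset V' = add_mset x (mset (butlast V))" and sV': "sorted_wrt (\<ge>) V'"
  shows "(1 + c_par d n + d) * (sum_list V' - sum_list V) - real n * (Bv d n V' - Bv d n V)
           \<ge> x + d * (x - Bv d n V)"
    and "sum_list V' - sum_list V \<ge> x - Bv d n V"
    and "Bv d n V' \<ge> Bv d n V"
    and "Bv d n V' \<ge> g_par d n 1 * x"
proof -
  define c where "c = c_par d n"
  define r where "r = 1 + d / real n"
  define g where "g = (\<lambda>i. g_par d n (Suc i))"
  define Bl where "Bl = butlast V"
  define k where "k = length (takeWhile (\<lambda>v. x \<le> v) Bl)"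
  define L where "L = V ! (n-1)"
  have cpos: "c > 0" using c_rel(2)[OF n d] by (simp add: c_def)
  have cr: "c * r ^ n = 1 + c + d" using c_rel(1)[OF n d] by (simp add: c_def r_def)
  have rge: "r \<ge> 1" using d by (simp add: r_def)
  have gform: "\<And>i. g i = c / real n * r ^ i" by (simp add: g_def g_eq c_def r_def)
  have g_nn: "\<And>i. g i \<ge> 0" using g_nonneg[OF n d] by (simp add: g_def)
  have gS: "\<And>i. g (Suc i) = r * g i" by (simp add: gform)
  have ngk: "\<And>i. real n * g i = c * r ^ i" using n by (simp add: gform)
  have gsumk: "\<And>j. d * (\<Sum>i<j. g i) = c * (r ^ j - 1)"
    using gsum[OF n d] by (simp add: g_def c_def r_def)
  have nr: "real n * (r - 1) = d" using n by (simp add: r_def)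
  have Bdef: "\<And>W. Bv d n W = (\<Sum>i<n. W ! i * g i)" by (simp add: Bv_def g_def)
  have lenBl: "length Bl = n - 1" using len by (simp add: Bl_def)
  have kle: "k \<le> n - 1" unfolding k_def using length_takeWhile_le[of _ Bl] lenBl by metis
  have klt: "k < n" using kle n by simp
  have Vnth: "\<And>i. i < n - 1 \<Longrightarrow> Bl ! i = V ! i" using len by (simp add: Bl_def nth_butlast)
  have Vne: "V \<noteq> []" using len n by auto
  have Vsplit: "V = Bl @ [L]"
    using Vne len by (metis Bl_def L_def append_butlast_last_id last_conv_nth)
  have sumV: "sum_list V = sum_list Bl + L" by (subst Vsplit) simp
  have nnV: "\<And>i. i < n \<Longrightarrow> V ! i \<ge> 0" using nn len by auto
  have sortedV: "\<And>i j. i \<le> j \<Longrightarrow> j < n \<Longrightarrow> V ! j \<le> V ! i"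
  proof -
    fix i j assume "i \<le> j" "j < n"
    then show "V ! j \<le> V ! i"
      using sV len by (cases "i = j") (auto simp: sorted_wrt_iff_nth_less)
  qed
  have Lnn: "L \<ge> 0" using nnV n by (simp add: L_def)
  have LleB: "L \<le> Bv d n V"
  proof -
    have "(\<Sum>i<n. L * g i) \<le> (\<Sum>i<n. V ! i * g i)"
      by (intro sum_mono mult_right_mono) (auto simp: L_def intro: sortedV g_nn)
    moreover have "(\<Sum>i<n. L * g i) = L * (\<Sum>i<n. g i)" by (simp add: sum_distrib_left)
    moreover have "(\<Sum>i<n. g i) \<ge> 1"
    proof -
      have "d * (\<Sum>i<n. g i) = 1 + d" using gsumk[of n] cr by (simp add: algebra_simps)
      then have "(\<Sum>i<n. g i) = (1 + d) / d" using d by (simp add: field_simps)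
      then show ?thesis using d by simp
    qed
    moreover have "L * 1 \<le> L * (\<Sum>i<n. g i)"
      using Lnn \<open>(\<Sum>i<n. g i) \<ge> 1\<close> by (intro mult_left_mono)
    ultimately have "L \<le> (\<Sum>i<n. V ! i * g i)" by linarith
    then show ?thesis by (simp add: Bdef)
  qed
  have Bnn: "Bv d n V \<ge> 0" using LleB Lnn by simp
  have xnn: "x \<ge> 0" using x Bnn by simp
  have takeP: "\<And>i. i < k \<Longrightarrow> x \<le> V ! i"
  proof -
    fix i assume "i < k"
    then have "takeWhile (\<lambda>v. x \<le> v) Bl ! i = Bl ! i" by (simp add: k_def takeWhile_nth)
    moreover have "takeWhile (\<lambda>v. x \<le> v) Bl ! i \<in> set (takeWhile (\<lambda>v. x \<le> v) Bl)"
      using \<open>i < k\<close> by (simp add: k_def)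
    ultimately have "x \<le> Bl ! i" by (metis (mono_tags, lifting) set_takeWhileD)
    then show "x \<le> V ! i" using Vnth \<open>i < k\<close> kle by simp
  qed
  have xgeVk: "V ! k \<le> x"
  proof (cases "k < n - 1")
    case True
    then have "\<not> x \<le> Bl ! k" unfolding k_def using lenBl
      by (metis (mono_tags, lifting) k_def nth_length_takeWhile)
    then show ?thesis using Vnth True by simp
  next
    case False
    then have "k = n - 1" using kle by simp
    then show ?thesis using LleB x by (simp add: L_def)
  qed
  define V'' where "V'' = take k Bl @ x # drop k Bl"
  have sBl: "sorted_wrt (\<ge>) Bl" unfolding Bl_def using sV by (simp add: butlast_conv_take sorted_wrt_take)
  have mV'': "mset V'' = add_mset x (mset Bl)"
  proof -
    have "mset V'' = mset (take k Bl) + add_mset x (mset (drop k Bl))" by (simp add: V''_def)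
    moreover have "mset (take k Bl) + mset (drop k Bl) = mset Bl"
      by (metis append_take_drop_id mset_append)
    ultimately show ?thesis by simp
  qed
  have sV'': "sorted_wrt (\<ge>) V''"
  proof -
    have tk: "take k Bl = takeWhile (\<lambda>v. x \<le> v) Bl" unfolding k_def by (rule takeWhile_eq_take[symmetric])
    have A1: "\<forall>a\<in>set (take k Bl). x \<le> a" unfolding tk by (auto dest: set_takeWhileD)
    have A2: "\<forall>b\<in>set (drop k Bl). b \<le> x"
    proof
      fix b assume "b \<in> set (drop k Bl)"
      then obtain j where j: "j < length (drop k Bl)" "b = drop k Bl ! j" by (metis in_set_conv_nth)
      then have b: "b = Bl ! (k + j)" "k + j < length Bl" by auto
      have "b \<le> Bl ! k" using sBl b by (cases "j = 0") (auto simp: sorted_wrt_iff_nth_less)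
      moreover have "k < length Bl" using b by simp
      then have "\<not> x \<le> Bl ! k" unfolding k_def by (metis (mono_tags, lifting) k_def nth_length_takeWhile)
      ultimately show "b \<le> x" by simp
    qed
    have A3: "sorted_wrt (\<ge>) (take k Bl @ drop k Bl)" using sBl by simp
    then have A4: "\<forall>a\<in>set (take k Bl). \<forall>b\<in>set (drop k Bl). b \<le> a"
      by (simp only: sorted_wrt_append) blast
    show ?thesis unfolding V''_def using A1 A2 A3 A4
      by (auto simp: sorted_wrt_append sorted_wrt_take sorted_wrt_drop sBl)
  qed
  have V'eq: "V' = V''"
    by (rule sorted_desc_unique[OF sV' sV'']) (simp add: mV' mV'' Bl_def)
  have sumV': "sum_list V' = sum_list Bl + x"
  proof -
    have "sum_list V' = sum_mset (mset V')" by (simp add: sum_mset_sum_list)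
    also have "\<dots> = x + sum_mset (mset Bl)" by (simp add: mV' Bl_def)
    finally show ?thesis by (simp add: sum_mset_sum_list)
  qed
  have lenV'': "length V'' = n" using lenBl kle n by (simp add: V''_def)
  have V''lt: "\<And>i. i < k \<Longrightarrow> V'' ! i = V ! i"
    using kle lenBl Vnth by (simp add: V''_def nth_append)
  have V''k: "V'' ! k = x" using kle lenBl by (simp add: V''_def nth_append)
  have V''gt: "\<And>j. k \<le> j \<Longrightarrow> j < n - 1 \<Longrightarrow> V'' ! Suc j = V ! j"
  proof -
    fix j assume "k \<le> j" "j < n - 1"
    then have "V'' ! Suc j = drop k Bl ! (j - k)"
      using kle lenBl by (simp add: V''_def nth_append Suc_diff_le)
    also have "\<dots> = Bl ! j" using \<open>k \<le> j\<close> \<open>j < n - 1\<close> lenBl by simp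
    finally show "V'' ! Suc j = V ! j" using Vnth \<open>j < n - 1\<close> by simp
  qed
  define P where "P = (\<Sum>i<k. V ! i * g i)"
  define M where "M = (\<Sum>j\<in>{k..<n-1}. V ! j * g j)"
  have B1: "Bv d n V = P + M + L * g (n-1)"
    unfolding Bdef P_def M_def L_def by (rule sum_split2[OF klt])
  have B2: "Bv d n V'' = P + x * g k + r * M"
  proof -
    have "Bv d n V'' = (\<Sum>i<k. V'' ! i * g i) + V'' ! k * g k + (\<Sum>j\<in>{k..<n-1}. V'' ! Suc j * g (Suc j))"
      unfolding Bdef by (rule sum_split3[OF klt])
    also have "(\<Sum>i<k. V'' ! i * g i) = P" unfolding P_def by (rule sum.cong) (auto simp: V''lt)
    also have "(\<Sum>j\<in>{k..<n-1}. V'' ! Suc j * g (Suc j)) = r * M"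
      unfolding M_def sum_distrib_left by (rule sum.cong) (auto simp: V''gt gS)
    finally show ?thesis using V''k by simp
  qed
  have B3: "Bv d n V = P + V ! k * g k + (\<Sum>j\<in>{k..<n-1}. V ! Suc j * g (Suc j))"
    unfolding Bdef P_def by (rule sum_split3[OF klt])
  have B4: "Bv d n V'' = P + x * g k + (\<Sum>j\<in>{k..<n-1}. V ! j * g (Suc j))"
  proof -
    have "Bv d n V'' = (\<Sum>i<k. V'' ! i * g i) + V'' ! k * g k + (\<Sum>j\<in>{k..<n-1}. V'' ! Suc j * g (Suc j))"
      unfolding Bdef by (rule sum_split3[OF klt])
    also have "(\<Sum>i<k. V'' ! i * g i) = P" unfolding P_def by (rule sum.cong) (auto simp: V''lt)
    also have "(\<Sum>j\<in>{k..<n-1}. V'' ! Suc j * g (Suc j)) = (\<Sum>j\<in>{k..<n-1}. V ! j * g (Suc j))"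
      by (rule sum.cong) (auto simp: V''gt)
    finally show ?thesis using V''k by simp
  qed
  show "Bv d n V' \<ge> Bv d n V"
  proof -
    have "(\<Sum>j\<in>{k..<n-1}. V ! Suc j * g (Suc j)) \<le> (\<Sum>j\<in>{k..<n-1}. V ! j * g (Suc j))"
      by (intro sum_mono mult_right_mono) (auto intro: sortedV g_nn)
    moreover have "V ! k * g k \<le> x * g k" using xgeVk g_nn by (simp add: mult_right_mono)
    ultimately show ?thesis using B3 B4 V'eq by simp
  qed
  have Pnn: "P \<ge> 0" unfolding P_def using nnV klt by (intro sum_nonneg mult_nonneg_nonneg) (auto simp: g_nn)
  have Mnn: "M \<ge> 0" unfolding M_def using nnV by (intro sum_nonneg mult_nonneg_nonneg) (auto simp: g_nn)
  show "Bv d n V' \<ge> g_par d n 1 * x"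
  proof -
    have "1 \<le> r ^ k" using rge by (rule one_le_power)
    then have "c * 1 \<le> c * r ^ k" using cpos by (intro mult_left_mono) auto
    then have "g 0 \<le> g k" unfolding gform by (simp add: divide_right_mono)
    then have "x * g 0 \<le> x * g k" using xnn by (simp add: mult_left_mono)
    moreover have "r * M \<ge> 0" using rge Mnn by simp
    ultimately show ?thesis using B2 V'eq Pnn by (simp add: g_def mult.commute)
  qed
  show "sum_list V' - sum_list V \<ge> x - Bv d n V" using sumV sumV' LleB by simp
  show "(1 + c_par d n + d) * (sum_list V' - sum_list V) - real n * (Bv d n V' - Bv d n V)
           \<ge> x + d * (x - Bv d n V)"
  proof -
    have Pge: "d * P \<ge> x * (c * r ^ k) - x * c"
    proof -
      have "(\<Sum>i<k. x * g i) \<le> P" unfolding P_def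
        by (intro sum_mono mult_right_mono) (auto intro: takeP g_nn)
      then have "x * (\<Sum>i<k. g i) \<le> P" by (simp add: sum_distrib_left)
      then have "d * (x * (\<Sum>i<k. g i)) \<le> d * P" using d by simp
      moreover have "d * (x * (\<Sum>i<k. g i)) = x * (d * (\<Sum>i<k. g i))" by (simp add: algebra_simps)
      moreover have "x * (d * (\<Sum>i<k. g i)) = x * (c * r ^ k) - x * c"
        unfolding gsumk[of k] by (simp add: algebra_simps)
      ultimately show ?thesis by simp
    qed
    have F1: "real n * (x * g k) = x * (c * r ^ k)" using ngk[of k] by (simp add: algebra_simps)
    have F2: "real n * (r * M) - real n * M = d * M" using nr by (simp add: algebra_simps)
    have F3: "real n * (L * g (n-1)) + d * (L * g (n-1)) = L * (1 + c + d)"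
    proof -
      have "real n * g (n-1) + d * g (n-1) = c * r ^ (n-1) * (real n + d) / real n"
        using n by (simp add: gform field_simps)
      also have "\<dots> = c * r ^ (n-1) * r" using n by (simp add: r_def field_simps)
      also have "\<dots> = c * r ^ n" using n by (metis Suc_diff_1 less_le_trans zero_less_one mult.assoc power_Suc2)
      finally have H: "real n * g (n-1) + d * g (n-1) = 1 + c + d" using cr by simp
      have "L * (real n * g (n-1) + d * g (n-1)) = L * (1 + c + d)" using H by simp
      then show ?thesis by (simp add: algebra_simps)
    qed
    have E: "(1 + c + d) * (sum_list V'' - sum_list V) - real n * (Bv d n V'' - Bv d n V) - (x + d * (x - Bv d n V))
      = x * c + x * d - L * (1 + c + d) - real n * (x * g k) - (real n * (r * M) - real n * M)
        + real n * (L * g (n-1)) + d * P + d * M + d * (L * g (n-1)) - x * d"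
      unfolding sumV sumV'[unfolded V'eq] B1 B2 by (simp add: algebra_simps)
    have "(1 + c + d) * (sum_list V'' - sum_list V) - real n * (Bv d n V'' - Bv d n V) - (x + d * (x - Bv d n V)) \<ge> 0"
      unfolding E using F1 F2 F3 Pge by linarith
    then show ?thesis using V'eq by (simp add: c_def)
  qed
qed

definition desc :: "(nat \<Rightarrow> real) \<Rightarrow> nat set \<Rightarrow> real list" where
  "desc w T = rev (sort (map w (sorted_list_of_set T)))"

definition padv :: "nat \<Rightarrow> (nat \<Rightarrow> real) \<Rightarrow> nat set \<Rightarrow> real list" where
  "padv n w T = desc w T @ replicate (n - card T) 0"

lemma mset_desc: "finite T \<Longrightarrow> mset (desc w T) = image_mset w (mset_set T)"
  unfolding desc_def by (simp add: mset_map) (metis mset_sorted_list_of_multiset sorted_list_of_mset_set)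

lemma len_desc: "finite T \<Longrightarrow> length (desc w T) = card T"
  unfolding desc_def by simp

lemma sorted_desc: "sorted_wrt (\<ge>) (desc w T)"
  unfolding desc_def by (simp add: sorted_wrt_rev)

lemma set_desc: "finite T \<Longrightarrow> set (desc w T) = w ` T"
  unfolding desc_def by simp

lemma sum_desc: "finite T \<Longrightarrow> sum_list (desc w T) = sum w T"
proof -
  assume "finite T"
  have "sum_list (desc w T) = sum_mset (mset (desc w T))" by (simp add: sum_mset_sum_list)
  also have "\<dots> = sum w T" using \<open>finite T\<close> by (simp add: mset_desc sum_unfold_sum_mset)
  finally show ?thesis .
qed

lemma padv_len: "finite T \<Longrightarrow> card T \<le> n \<Longrightarrow> length (padv n w T) = n"
  by (simp add: padv_def len_desc)

lemma padv_sum: "finite T \<Longrightarrow> sum_list (padv n w T) = sum w T"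
  by (simp add: padv_def sum_desc sum_list_replicate)

lemma padv_nn: "finite T \<Longrightarrow> \<forall>s\<in>T. w s \<ge> 0 \<Longrightarrow> \<forall>v\<in>set (padv n w T). 0 \<le> v"
  by (auto simp: padv_def set_desc)

lemma padv_sorted: "finite T \<Longrightarrow> \<forall>s\<in>T. w s \<ge> 0 \<Longrightarrow> sorted_wrt (\<ge>) (padv n w T)"
proof -
  assume a: "finite T" "\<forall>s\<in>T. w s \<ge> 0"
  have r: "sorted_wrt (\<ge>) (replicate j (0::real))" for j by (induction j) auto
  show ?thesis unfolding padv_def using sorted_desc[of w T] r a
    by (auto simp: sorted_wrt_append set_desc)
qed

lemma padv_mset: "finite T \<Longrightarrow> mset (padv n w T) = image_mset w (mset_set T) + replicate_mset (n - card T) 0"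
  by (simp add: padv_def mset_desc)

lemma thr_padv:
  assumes "finite T" "card T \<le> n"
  shows "threshold d n w T = Bv d n (padv n w T)"
proof -
  have "threshold d n w T = (\<Sum>i\<in>{Suc 0..Suc (n-1)}. ith_largest w T i * g_par d n i)" if "n \<ge> 1"
    using that unfolding threshold_def by simp
  have "threshold d n w T = (\<Sum>i<n. ith_largest w T (Suc i) * g_par d n (Suc i))"
  proof (cases n)
    case 0 then show ?thesis by (simp add: threshold_def)
  next
    case (Suc n')
    have "threshold d n w T = (\<Sum>i\<in>{Suc 0..Suc n'}. ith_largest w T i * g_par d n i)"
      unfolding threshold_def Suc by simp
    also have "\<dots> = (\<Sum>i\<in>{0..n'}. ith_largest w T (Suc i) * g_par d n (Suc i))"
      by (rule sum.shift_bounds_cl_Suc_ivl)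
    also have "{0..n'} = {..<n}" using Suc by auto
    finally show ?thesis .
  qed
  also have "\<dots> = Bv d n (padv n w T)"
    unfolding Bv_def
  proof (rule sum.cong)
    fix i assume "i \<in> {..<n}"
    then have "ith_largest w T (Suc i) = padv n w T ! i"
      using assms by (auto simp: ith_largest_def padv_def nth_append len_desc desc_def[symmetric] Let_def)
    then show "ith_largest w T (Suc i) * g_par d n (Suc i) = padv n w T ! i * g_par d n (i + 1)" by simp
  qed simp
  finally show ?thesis .
qed

lemma Bv_nn: "n \<ge> 1 \<Longrightarrow> d > 0 \<Longrightarrow> \<forall>v\<in>set V. 0 \<le> v \<Longrightarrow> length V = n \<Longrightarrow> Bv d n V \<ge> 0"
  unfolding Bv_def by (intro sum_nonneg mult_nonneg_nonneg) (auto simp: g_nonneg)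

lemma thr_nn:
  assumes "n \<ge> 1" "d > 0" "finite T" "card T \<le> n" "\<forall>s\<in>T. w s \<ge> 0"
  shows "threshold d n w T \<ge> 0"
  using assms by (simp add: thr_padv Bv_nn padv_nn padv_len)

lemma thr_cong:
  assumes "finite T" "\<forall>s\<in>T. w s = w' s"
  shows "threshold d n w T = threshold d n w' T"
proof -
  have "map w (sorted_list_of_set T) = map w' (sorted_list_of_set T)"
    using assms by (intro map_cong) auto
  then show ?thesis unfolding threshold_def ith_largest_def Let_def by (simp only:)
qed

lemma butlast_replicate': "butlast (replicate j x) = replicate (j - 1) x"
proof (cases j)
  case 0 then show ?thesis by simp
next
  case (Suc j')
  then have "replicate j x = replicate j' x @ [x]" by (simp add: replicate_append_same)
  then show ?thesis using Suc by simp
qed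

lemma last_desc_min:
  fixes V :: "real list"
  assumes "sorted_wrt (\<ge>) V" "V \<noteq> []" "y \<in> set V"
  shows "last V \<le> y"
proof -
  have "V = butlast V @ [last V]" using assms by simp
  then have "sorted_wrt (\<ge>) (butlast V @ [last V])" using assms by metis
  then have "\<forall>z\<in>set (butlast V). last V \<le> z" by (simp add: sorted_wrt_append)
  moreover have "y \<in> set (butlast V) \<or> y = last V"
    using assms \<open>V = butlast V @ [last V]\<close> by (metis Un_iff empty_iff empty_set list.simps(15) set_append singletonD)
  ultimately show ?thesis by auto
qed

lemma block_step:
  fixes T T' :: "nat set" and w :: "nat \<Rightarrow> real" and x d :: real and n t e :: nat
  assumes n: "n \<ge> 1" and d: "d > 0" and fin: "finite T" and cardT: "card T \<le> n"
    and wnn: "\<forall>s\<in>T. w s \<ge> 0" and x: "x \<ge> threshold d n w T" and t: "t \<notin> T"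
    and full: "card T = n \<Longrightarrow> e \<in> T \<and> (\<forall>y\<in>T. w e \<le> w y)"
    and T': "T' = (if card T < n then insert t T else insert t (T - {e}))"
  shows "(1 + c_par d n + d) * (sum (w(t:=x)) T' - sum w T)
           - real n * (threshold d n (w(t:=x)) T' - threshold d n w T) \<ge> x + d * (x - threshold d n w T)"
    and "sum (w(t:=x)) T' - sum w T \<ge> x - threshold d n w T"
    and "threshold d n (w(t:=x)) T' \<ge> threshold d n w T"
    and "threshold d n (w(t:=x)) T' \<ge> g_par d n 1 * x"
    and "card T' \<le> n" and "finite T'"
proof -
  define w' where "w' = w(t:=x)"
  define V where "V = padv n w T"
  define V' where "V' = padv n w' T'"
  have finT': "finite T'" using fin T' by auto
  have cardT': "card T' \<le> n"
  proof (cases "card T < n")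
    case True then show ?thesis using T' fin t by simp
  next
    case False
    then have "card T = n" using cardT by simp
    then have "e \<in> T" using full by simp
    then have "card (T - {e}) = n - 1" using fin \<open>card T = n\<close> by simp
    moreover have "t \<notin> T - {e}" using t by simp
    ultimately show ?thesis using T' False fin n by simp
  qed
  have thrnn: "threshold d n w T \<ge> 0" using thr_nn[OF n d fin cardT wnn] .
  have xnn: "x \<ge> 0" using x thrnn by simp
  have w'nn: "\<forall>s\<in>T'. w' s \<ge> 0"
  proof
    fix s assume "s \<in> T'"
    then have "s = t \<or> s \<in> T" using T' by (auto split: if_splits)
    then show "w' s \<ge> 0" using wnn xnn by (auto simp: w'_def)
  qed
  have lenV: "length V = n" using padv_len[OF fin cardT] by (simp add: V_def)
  have sV: "sorted_wrt (\<ge>) V" using padv_sorted[OF fin wnn] by (simp add: V_def)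
  have nnV: "\<forall>v\<in>set V. 0 \<le> v" using padv_nn[OF fin wnn] by (simp add: V_def)
  have sV': "sorted_wrt (\<ge>) V'" using padv_sorted[OF finT' w'nn] by (simp add: V'_def)
  have BV: "threshold d n w T = Bv d n V" using thr_padv[OF fin cardT] by (simp add: V_def)
  have BV': "threshold d n w' T' = Bv d n V'" using thr_padv[OF finT' cardT'] by (simp add: V'_def)
  have imw: "image_mset w' (mset_set A) = image_mset w (mset_set A)" if "A \<subseteq> T" for A
  proof -
    have "finite A" using that fin finite_subset by blast
    then show ?thesis using that t by (intro image_mset_cong) (auto simp: w'_def)
  qed
  have mV': "mset V' = add_mset x (mset (butlast V))"
  proof (cases "card T < n")
    case True
    then have T'e: "T' = insert t T" using T' by simp
    have "mset V' = image_mset w' (mset_set (insert t T)) + replicate_mset (n - card (insert t T)) 0"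
      unfolding V'_def T'e by (rule padv_mset) (use fin in simp)
    also have "image_mset w' (mset_set (insert t T)) = add_mset x (image_mset w (mset_set T))"
      using fin t imw[of T] by (simp add: w'_def)
    also have "n - card (insert t T) = n - card T - 1" using fin t by simp
    finally have A: "mset V' = add_mset x (image_mset w (mset_set T)) + replicate_mset (n - card T - 1) 0" .
    have "butlast V = desc w T @ replicate (n - card T - 1) 0"
      using True by (simp add: V_def padv_def butlast_append butlast_replicate')
    then have "mset (butlast V) = image_mset w (mset_set T) + replicate_mset (n - card T - 1) 0"
      using fin by (simp add: mset_desc)
    then show ?thesis using A by simp
  next
    case False
    then have cT: "card T = n" using cardT by simp
    then have e: "e \<in> T" "\<forall>y\<in>T. w e \<le> w y" using full by auto
    have T'e: "T' = insert t (T - {e})" using T' False by simp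
    have "mset V' = image_mset w' (mset_set (insert t (T - {e}))) + replicate_mset (n - card T') 0"
      unfolding V'_def using padv_mset[OF finT'] T'e by simp
    also have "n - card T' = 0"
      using cardT' T'e fin e t cT n by (simp add: card_insert_if)
    also have "image_mset w' (mset_set (insert t (T - {e}))) = add_mset x (image_mset w (mset_set (T - {e})))"
      using fin t imw[of "T - {e}"] by (simp add: w'_def)
    finally have A: "mset V' = add_mset x (image_mset w (mset_set (T - {e})))" by simp
    have Vd: "V = desc w T" using cT by (simp add: V_def padv_def)
    have Vne: "V \<noteq> []" using lenV n by auto
    have mV: "mset V = image_mset w (mset_set T)" using Vd fin by (simp add: mset_desc)
    have lastV: "last V = w e"
    proof (rule antisym)
      show "last V \<le> w e" using last_desc_min[OF sV Vne] e fin by (simp add: Vd set_desc)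
      have "last V \<in> set V" using Vne by simp
      then obtain s where "s \<in> T" "last V = w s" using fin by (auto simp: Vd set_desc)
      then show "w e \<le> last V" using e by simp
    qed
    have "mset V = add_mset (last V) (mset (butlast V))"
      using Vne by (metis append_butlast_last_id mset_append mset_single_iff_right add_mset_add_single union_commute mset.simps)
    also have "mset V = add_mset (w e) (image_mset w (mset_set (T - {e})))"
      using mV fin e by (simp add: mset_set.remove)
    finally have "mset (butlast V) = image_mset w (mset_set (T - {e}))" using lastV by simp
    then show ?thesis using A by simp
  qed
  have "x \<ge> Bv d n V" using x BV by simp
  note C = core[OF n d lenV sV nnV this mV' sV']
  have sumV: "sum_list V = sum w T" using padv_sum[OF fin] by (simp add: V_def)
  have sumV': "sum_list V' = sum w' T'" using padv_sum[OF finT'] by (simp add: V'_def)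
  show "(1 + c_par d n + d) * (sum (w(t:=x)) T' - sum w T)
           - real n * (threshold d n (w(t:=x)) T' - threshold d n w T) \<ge> x + d * (x - threshold d n w T)"
    using C(1) unfolding BV BV'[unfolded w'_def] sumV sumV'[unfolded w'_def] .
  show "sum (w(t:=x)) T' - sum w T \<ge> x - threshold d n w T"
    using C(2) unfolding BV sumV sumV'[unfolded w'_def] .
  show "threshold d n (w(t:=x)) T' \<ge> threshold d n w T"
    using C(3) unfolding BV BV'[unfolded w'_def] .
  show "threshold d n (w(t:=x)) T' \<ge> g_par d n 1 * x"
    using C(4) unfolding BV'[unfolded w'_def] .
  show "card T' \<le> n" by (rule cardT')
  show "finite T'" by (rule finT')
qed




lemma rand_set_aux:
  fixes \<pi> :: "'a \<Rightarrow> real" and \<Omega> :: "'a set" and h :: "nat set \<Rightarrow> real"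
  assumes fO: "finite \<Omega>" and pnn: "\<forall>\<omega>\<in>\<Omega>. \<pi> \<omega> \<ge> 0" and p1: "sum \<pi> \<Omega> = 1"
    and hnn: "\<forall>X. X \<subseteq> U0 \<longrightarrow> h X \<ge> 0"
    and hsub: "\<forall>X Y. X \<subseteq> U0 \<longrightarrow> Y \<subseteq> U0 \<longrightarrow> h (X \<union> Y) + h (X \<inter> Y) \<le> h X + h Y"
  shows "finite U \<Longrightarrow> U \<subseteq> U0 \<Longrightarrow> \<forall>\<omega>\<in>\<Omega>. A \<omega> \<subseteq> U \<Longrightarrow> 0 \<le> \<mu> \<Longrightarrow> \<mu> \<le> M \<Longrightarrow>
    \<forall>i\<in>U. \<mu> \<le> (\<Sum>\<omega>\<in>\<Omega>. \<pi> \<omega> * (if i \<in> A \<omega> then 1 else 0)) \<and> (\<Sum>\<omega>\<in>\<Omega>. \<pi> \<omega> * (if i \<in> A \<omega> then 1 else 0)) \<le> M \<Longrightarrow>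
    (\<Sum>\<omega>\<in>\<Omega>. \<pi> \<omega> * h (A \<omega>)) \<ge> (1 - M) * h {} + \<mu> * h U"
proof (induction "card U" arbitrary: U A \<mu> rule: less_induct)
  case less
  define q where "q = (\<lambda>(A::'a \<Rightarrow> nat set) (i::nat). (\<Sum>\<omega>\<in>\<Omega>. \<pi> \<omega> * (if i \<in> A \<omega> then 1 else (0::real))))"
  show ?case
  proof (cases "U = {}")
    case True
    then have "\<forall>\<omega>\<in>\<Omega>. A \<omega> = {}" using less.prems by auto
    then have "(\<Sum>\<omega>\<in>\<Omega>. \<pi> \<omega> * h (A \<omega>)) = (\<Sum>\<omega>\<in>\<Omega>. \<pi> \<omega> * h {})" by simp
    also have "\<dots> = h {}" using p1 by (simp add: sum_distrib_right[symmetric])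
    finally have e: "(\<Sum>\<omega>\<in>\<Omega>. \<pi> \<omega> * h (A \<omega>)) = h {}" .
    have "h {} \<ge> 0" using hnn by simp
    then have "(1 - M) * h {} + \<mu> * h {} \<le> h {}" using less.prems
      by (metis add.commute add_le_cancel_left diff_add_cancel mult_right_mono ring_class.ring_distribs(2) le_diff_eq mult_1)
    then show ?thesis using e True by simp
  next
    case False
    obtain u where u: "u \<in> U" "\<forall>i\<in>U. q A u \<le> q A i"
      using ex_min_if_finite[OF less.prems(1) False] False less.prems(1)
      by (metis (no_types, lifting) arg_min_on_def arg_min_if_finite(1) arg_min_least)
    define U' where "U' = U - {u}"
    define A' where "A' = (\<lambda>\<omega>. A \<omega> - {u})"
    have cU': "card U' < card U" unfolding U'_def using less.prems(1) u(1) by (metis card_Diff1_less)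
    have qA': "\<forall>i\<in>U'. q A' i = q A i" unfolding q_def A'_def U'_def by auto
    have IH: "(\<Sum>\<omega>\<in>\<Omega>. \<pi> \<omega> * h (A' \<omega>)) \<ge> (1 - M) * h {} + q A u * h U'"
    proof (rule less.hyps[OF cU'])
      show "finite U'" using less.prems(1) by (simp add: U'_def)
      show "U' \<subseteq> U0" using less.prems(2) by (auto simp: U'_def)
      show "\<forall>\<omega>\<in>\<Omega>. A' \<omega> \<subseteq> U'" using less.prems(3) by (auto simp: A'_def U'_def)
      show "0 \<le> q A u" unfolding q_def using pnn by (intro sum_nonneg) auto
      show "q A u \<le> M" using less.prems(6) u(1) by (simp add: q_def)
      have "\<forall>i\<in>U'. q A u \<le> q A' i \<and> q A' i \<le> M"
        using qA' u less.prems(6) by (auto simp: U'_def q_def)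
      then show "\<forall>i\<in>U'. q A u \<le> (\<Sum>\<omega>\<in>\<Omega>. \<pi> \<omega> * (if i \<in> A' \<omega> then 1 else 0)) \<and> (\<Sum>\<omega>\<in>\<Omega>. \<pi> \<omega> * (if i \<in> A' \<omega> then 1 else 0)) \<le> M"
        by (simp add: q_def)
    qed
    have pw: "h (A \<omega>) \<ge> h (A' \<omega>) + (if u \<in> A \<omega> then 1 else 0) * (h U - h U')" if "\<omega> \<in> \<Omega>" for \<omega>
    proof (cases "u \<in> A \<omega>")
      case True
      have sub: "A \<omega> \<subseteq> U" using less.prems(3) that by auto
      have "A \<omega> \<union> U' = U" "A \<omega> \<inter> U' = A' \<omega>"
        using True sub u(1) by (auto simp: U'_def A'_def)
      moreover have "h (A \<omega> \<union> U') + h (A \<omega> \<inter> U') \<le> h (A \<omega>) + h U'"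
      proof -
        have "A \<omega> \<subseteq> U0" "U' \<subseteq> U0" using sub less.prems(2) by (auto simp: U'_def)
        then show ?thesis using hsub by blast
      qed
      ultimately show ?thesis using True by simp
    next
      case False
      then show ?thesis by (simp add: A'_def)
    qed
    have "(\<Sum>\<omega>\<in>\<Omega>. \<pi> \<omega> * h (A \<omega>)) \<ge> (\<Sum>\<omega>\<in>\<Omega>. \<pi> \<omega> * (h (A' \<omega>) + (if u \<in> A \<omega> then 1 else 0) * (h U - h U')))"
      using pw pnn by (intro sum_mono mult_left_mono) auto
    also have "(\<Sum>\<omega>\<in>\<Omega>. \<pi> \<omega> * (h (A' \<omega>) + (if u \<in> A \<omega> then 1 else 0) * (h U - h U')))
       = (\<Sum>\<omega>\<in>\<Omega>. \<pi> \<omega> * h (A' \<omega>)) + q A u * (h U - h U')"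
    proof -
      have "(\<Sum>\<omega>\<in>\<Omega>. \<pi> \<omega> * (h (A' \<omega>) + (if u \<in> A \<omega> then 1 else 0) * (h U - h U')))
        = (\<Sum>\<omega>\<in>\<Omega>. \<pi> \<omega> * h (A' \<omega>) + (h U - h U') * (\<pi> \<omega> * (if u \<in> A \<omega> then 1 else 0)))"
        by (rule sum.cong) (auto simp: algebra_simps)
      also have "\<dots> = (\<Sum>\<omega>\<in>\<Omega>. \<pi> \<omega> * h (A' \<omega>)) + (h U - h U') * q A u"
        unfolding q_def by (simp add: sum.distrib sum_distrib_left)
      finally show ?thesis by simp
    qed
    finally have "(\<Sum>\<omega>\<in>\<Omega>. \<pi> \<omega> * h (A \<omega>)) \<ge> (1 - M) * h {} + q A u * h U"
      using IH by (simp add: algebra_simps)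
    moreover have "\<mu> * h U \<le> q A u * h U"
      using less.prems(6) u(1) hnn less.prems(2) by (intro mult_right_mono) (auto simp: q_def)
    ultimately show ?thesis by simp
  qed
qed




lemma submod_marg:
  assumes "submodular_on V f" "X \<subseteq> Y" "Y \<subseteq> V" "u \<in> V" "u \<notin> Y"
  shows "f (Y \<union> {u}) - f Y \<le> f (X \<union> {u}) - f X"
proof -
  have "X \<union> {u} \<subseteq> V" using assms by auto
  then have "f ((X \<union> {u}) \<union> Y) + f ((X \<union> {u}) \<inter> Y) \<le> f (X \<union> {u}) + f Y"
    using assms(1,3) unfolding submodular_on_def by blast
  moreover have "(X \<union> {u}) \<union> Y = Y \<union> {u}" "(X \<union> {u}) \<inter> Y = X" using assms by auto
  ultimately show ?thesis by simp
qed

locale alg_setting =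
  fixes f :: "nat set \<Rightarrow> real" and P :: "nat \<Rightarrow> nat set" and k :: nat and n :: "nat \<Rightarrow> nat"
    and d :: "nat \<Rightarrow> real" and tb :: "nat set \<Rightarrow> (nat \<Rightarrow> real) \<Rightarrow> nat \<Rightarrow> nat" and m :: nat
  assumes submod: "submodular_on {1..m} f"
    and part_disj: "\<forall>a\<in>{1..k}. \<forall>b\<in>{1..k}. a \<noteq> b \<longrightarrow> P a \<inter> P b = {}"
    and part_cover: "(\<Union>a\<in>{1..k}. P a) = {1..m}"
    and budgets: "\<forall>a\<in>{1..k}. n a \<ge> 1"
    and d_pos: "\<forall>a\<in>{1..k}. d a > 0"
    and tiebreak: "\<forall>S w t a. a \<in> {1..k} \<longrightarrow> t \<in> P a \<longrightarrow> S \<inter> P a \<noteq> {} \<longrightarrow>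
                     tb S w t \<in> S \<inter> P a \<and> (\<forall>x\<in>S \<inter> P a. w (tb S w t) \<le> w x)"
begin

definition "blk t = block_of P k t"

lemma P_sub: "a \<in> {1..k} \<Longrightarrow> P a \<subseteq> {1..m}"
  using part_cover by blast

lemma blk_eq: assumes "a \<in> {1..k}" "t \<in> P a" shows "blk t = a"
  unfolding blk_def block_of_def
proof (rule the_equality)
  show "a \<in> {1..k} \<and> t \<in> P a" using assms by simp
  fix b assume "b \<in> {1..k} \<and> t \<in> P b"
  then show "b = a" using assms part_disj by blast
qed

lemma blk: assumes "t \<in> {1..m}" shows "blk t \<in> {1..k}" "t \<in> P (blk t)"
proof -
  obtain a where "a \<in> {1..k}" "t \<in> P a" using assms part_cover by blast
  then show "blk t \<in> {1..k}" "t \<in> P (blk t)" using blk_eq by auto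
qed

definition st :: "(nat \<Rightarrow> bool) \<Rightarrow> nat \<Rightarrow> nat set \<times> (nat \<Rightarrow> real) \<times> (nat \<Rightarrow> real)" where
  "st Z t = fold (alg_step f P k n d tb Z) [1..<t+1] ({}, (\<lambda>_. 0), (\<lambda>_. 0))"
definition "SS Z t = fst (st Z t)"
definition "WW Z t = fst (snd (st Z t))"
definition "BB Z t = snd (snd (st Z t))"
definition "mw Z t = f (SS Z (t-1) \<union> {t}) - f (SS Z (t-1))"
definition "bt Z t = BB Z (t-1) (blk t)"
definition "acc Z t \<longleftrightarrow> bt Z t \<le> mw Z t \<and> Z t"
definition "AA Z t = {s\<in>{1..t}. acc Z s}"

lemma st_0: "st Z 0 = ({}, (\<lambda>_. 0), (\<lambda>_. 0))" by (simp add: st_def)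
lemma st_Suc: "st Z (Suc t) = alg_step f P k n d tb Z (Suc t) (st Z t)" by (simp add: st_def)

lemma out_eq: "alg_output f P k n d tb m Z = SS Z m"
  by (simp add: alg_output_def SS_def st_def)

lemma step_SS: "SS Z (Suc t) = (if acc Z (Suc t) then (if card (SS Z t \<inter> P (blk (Suc t))) < n (blk (Suc t))
    then insert (Suc t) (SS Z t) else insert (Suc t) (SS Z t - {tb (SS Z t) (WW Z t) (Suc t)})) else SS Z t)"
  by (cases "st Z t") (simp add: SS_def WW_def BB_def st_Suc alg_step_def Let_def acc_def mw_def bt_def blk_def)

lemma step_WW: "WW Z (Suc t) = (if acc Z (Suc t) then (WW Z t)(Suc t := mw Z (Suc t)) else WW Z t)"
  by (cases "st Z t") (simp add: SS_def WW_def BB_def st_Suc alg_step_def Let_def acc_def mw_def bt_def blk_def)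

lemma step_BB: "BB Z (Suc t) = (if acc Z (Suc t) then (BB Z t)(blk (Suc t) := threshold (d (blk (Suc t))) (n (blk (Suc t)))
    (WW Z (Suc t)) (SS Z (Suc t) \<inter> P (blk (Suc t)))) else BB Z t)"
  by (cases "st Z t") (simp add: SS_def WW_def BB_def st_Suc alg_step_def Let_def acc_def mw_def bt_def blk_def)

lemma AA_Suc: "AA Z (Suc t) = (if acc Z (Suc t) then insert (Suc t) (AA Z t) else AA Z t)"
  by (auto simp: AA_def le_Suc_eq)

lemma AA_sub: "AA Z t \<subseteq> {1..t}" by (auto simp: AA_def)

lemma st_local: "(\<forall>x\<in>{1..t}. Z x = Z' x) \<Longrightarrow> st Z t = st Z' t"
proof (induction t)
  case 0 then show ?case by (simp add: st_0)
next
  case (Suc t)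
  then have "st Z t = st Z' t" by auto
  moreover have "Z (Suc t) = Z' (Suc t)" using Suc.prems by auto
  ultimately show ?case by (simp add: st_Suc alg_step_def)
qed

definition "Wb Z t a = (\<Sum>s\<in>SS Z t \<inter> P a. mw Z s)"
definition "Xb Z t a = (\<Sum>s\<in>AA Z t \<inter> P a. mw Z s)"
definition "Eb Z t a = (\<Sum>s\<in>AA Z t \<inter> P a. mw Z s - bt Z s)"

definition inv where "inv Z t \<longleftrightarrow>
  SS Z t \<subseteq> AA Z t \<and>
  (\<forall>s\<in>AA Z t. WW Z t s = mw Z s \<and> 0 \<le> bt Z s \<and> bt Z s \<le> mw Z s) \<and>
  (\<forall>a\<in>{1..k}. card (SS Z t \<inter> P a) \<le> n a \<and> BB Z t a = threshold (d a) (n a) (WW Z t) (SS Z t \<inter> P a) \<and> 0 \<le> BB Z t a) \<and>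
  (\<forall>T \<subseteq> SS Z t. f {} + (\<Sum>s\<in>T. mw Z s) \<le> f T) \<and>
  f (AA Z t) \<le> f {} + (\<Sum>s\<in>AA Z t. mw Z s) \<and>
  (\<forall>a\<in>{1..k}. Xb Z t a + real (n a) * BB Z t a + d a * Eb Z t a \<le> (1 + c_par (d a) (n a) + d a) * Wb Z t a
      \<and> Eb Z t a \<le> Wb Z t a \<and> (\<forall>s\<in>AA Z t \<inter> P a. g_par (d a) (n a) 1 * mw Z s \<le> BB Z t a)) \<and>
  (\<forall>s\<in>{1..t}. \<forall>a\<in>{1..k}. BB Z (s-1) a \<le> BB Z t a)"

lemma inv_0: "inv Z 0"
  by (simp add: inv_def AA_def SS_def WW_def BB_def st_0 Wb_def Xb_def Eb_def threshold_def ith_largest_def)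

lemma inv_Suc:
  assumes I: "inv Z t" and tm: "Suc t \<le> m"
  shows "inv Z (Suc t)"
proof -
  define u where "u = Suc t"
  define a0 where "a0 = blk u"
  have um: "u \<in> {1..m}" using tm by (simp add: u_def)
  have a0: "a0 \<in> {1..k}" "u \<in> P a0" using blk[OF um] by (simp_all add: a0_def)
  have uA: "u \<notin> AA Z t" using AA_sub[of Z t] by (auto simp: u_def)
  have SA: "SS Z t \<subseteq> AA Z t" using I unfolding inv_def by blast
  have uS: "u \<notin> SS Z t" using uA SA by auto
  have AAm: "AA Z t \<subseteq> {1..m}" using AA_sub[of Z t] tm by auto
  have SSm: "SS Z t \<subseteq> {1..m}" using SA AAm by auto
  have finS: "finite (SS Z t)" using SSm finite_subset by blast
  have finA: "finite (AA Z t)" using AAm finite_subset by blast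
  have mwu: "mw Z u = f (SS Z t \<union> {u}) - f (SS Z t)" by (simp add: mw_def u_def)
  have btu: "bt Z u = BB Z t a0" by (simp add: bt_def u_def a0_def)
  have notPb: "\<And>b. b \<in> {1..k} \<Longrightarrow> b \<noteq> a0 \<Longrightarrow> u \<notin> P b" using part_disj a0 by blast
  show ?thesis
  proof (cases "acc Z u")
    case False
    have eqs: "SS Z (Suc t) = SS Z t" "WW Z (Suc t) = WW Z t" "BB Z (Suc t) = BB Z t" "AA Z (Suc t) = AA Z t"
      using False by (simp_all add: step_SS step_WW step_BB AA_Suc u_def)
    have eqs2: "Wb Z (Suc t) = Wb Z t" "Xb Z (Suc t) = Xb Z t" "Eb Z (Suc t) = Eb Z t"
      by (simp_all add: Wb_def Xb_def Eb_def eqs fun_eq_iff)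
    have IB: "\<forall>s\<in>{1..t}. \<forall>a\<in>{1..k}. BB Z (s-1) a \<le> BB Z t a" using I unfolding inv_def by blast
    have L: "\<forall>s\<in>{1..Suc t}. \<forall>a\<in>{1..k}. BB Z (s-1) a \<le> BB Z t a"
    proof (intro ballI)
      fix s a assume "s \<in> {1..Suc t}" "a \<in> {1..k}"
      then show "BB Z (s-1) a \<le> BB Z t a"
        using IB by (cases "s = Suc t") auto
    qed
    show ?thesis using I L unfolding inv_def eqs eqs2 by blast
  next
    case True
    define S where "S = SS Z t"
    define w where "w = WW Z t"
    define x where "x = mw Z u"
    define T where "T = S \<inter> P a0"
    define e where "e = tb S w u"
    define S' where "S' = SS Z (Suc t)"
    have Svals: "\<forall>s\<in>AA Z t. WW Z t s = mw Z s \<and> 0 \<le> bt Z s \<and> bt Z s \<le> mw Z s" using I unfolding inv_def by blast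
    have Ib: "\<forall>a\<in>{1..k}. card (SS Z t \<inter> P a) \<le> n a \<and> BB Z t a = threshold (d a) (n a) (WW Z t) (SS Z t \<inter> P a) \<and> 0 \<le> BB Z t a"
      using I unfolding inv_def by blast
    have na0: "n a0 \<ge> 1" "d a0 > 0" using budgets d_pos a0 by auto
    have cardT: "card T \<le> n a0" using Ib a0 by (simp add: T_def S_def)
    have finT: "finite T" using finS by (simp add: T_def S_def)
    have S'eq: "S' = (if card T < n a0 then insert u S else insert u (S - {e}))"
      using True unfolding S'_def T_def S_def e_def w_def a0_def u_def by (simp add: step_SS)
    have full: "card T = n a0 \<Longrightarrow> e \<in> T \<and> (\<forall>y\<in>T. w e \<le> w y)"
    proof -
      assume "card T = n a0"
      then have "T \<noteq> {}" using na0 by auto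
      then show "e \<in> T \<and> (\<forall>y\<in>T. w e \<le> w y)"
        using tiebreak a0 by (simp add: T_def e_def)
    qed
    have uT: "u \<notin> T" using uS by (simp add: T_def S_def)
    have T'eq: "S' \<inter> P a0 = (if card T < n a0 then insert u T else insert u (T - {e}))"
      using S'eq a0(2) by (auto simp: T_def)
    have S'sub: "S' \<subseteq> insert u S" using S'eq by auto
    have Sb: "\<And>b. b \<in> {1..k} \<Longrightarrow> b \<noteq> a0 \<Longrightarrow> S' \<inter> P b = S \<inter> P b"
    proof -
      fix b assume b: "b \<in> {1..k}" "b \<noteq> a0"
      show "S' \<inter> P b = S \<inter> P b"
      proof (cases "card T < n a0")
        case True then show ?thesis using S'eq notPb[OF b] by auto
      next
        case False
        then have "e \<in> T" using full cardT by simp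
        moreover have "P a0 \<inter> P b = {}" using part_disj a0(1) b by blast
        ultimately have "e \<notin> P b" by (auto simp: T_def)
        then show ?thesis using S'eq False notPb[OF b] by auto
      qed
    qed
    have W'eq: "WW Z (Suc t) = w(u := x)" using True unfolding w_def x_def u_def by (simp add: step_WW)
    have AAeq: "AA Z (Suc t) = insert u (AA Z t)" using True unfolding u_def by (simp add: AA_Suc)
    have BBa0: "BB Z (Suc t) a0 = threshold (d a0) (n a0) (w(u:=x)) (S' \<inter> P a0)"
      using True W'eq unfolding S'_def a0_def u_def by (simp add: step_BB)
    have BBb: "\<And>b. b \<noteq> a0 \<Longrightarrow> BB Z (Suc t) b = BB Z t b"
      using True unfolding a0_def u_def by (simp add: step_BB)
    have thrT: "threshold (d a0) (n a0) w T \<le> x"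
      using True Ib a0 btu by (simp add: acc_def T_def S_def w_def x_def)
    have wnn: "\<forall>s\<in>T. w s \<ge> 0" using Svals SA by (force simp: T_def S_def w_def)
    note B = block_step[OF na0 finT cardT wnn thrT uT full T'eq]
    have sumT: "sum w T = Wb Z t a0"
      unfolding Wb_def T_def S_def using Svals SA by (intro sum.cong) (auto simp: w_def S_def)
    have sumT': "sum (w(u:=x)) (S' \<inter> P a0) = Wb Z (Suc t) a0"
      unfolding Wb_def S'_def[symmetric]
    proof (rule sum.cong)
      fix s assume "s \<in> S' \<inter> P a0"
      then have "s = u \<or> s \<in> S" using S'sub by auto
      then show "(w(u:=x)) s = mw Z s" using Svals SA by (auto simp: x_def w_def S_def)
    qed simp
    have BBt: "BB Z t a0 = threshold (d a0) (n a0) w T" using Ib a0 by (simp add: T_def S_def w_def)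
    have uPa0: "AA Z (Suc t) \<inter> P a0 = insert u (AA Z t \<inter> P a0)" using AAeq a0 by auto
    have uPb: "\<And>b. b \<in> {1..k} \<Longrightarrow> b \<noteq> a0 \<Longrightarrow> AA Z (Suc t) \<inter> P b = AA Z t \<inter> P b"
      using AAeq notPb by auto
    have finAP: "\<And>b. finite (AA Z t \<inter> P b)" using finA by simp
    have uAP: "u \<notin> AA Z t \<inter> P a0" using uA by simp
    have Xa0: "Xb Z (Suc t) a0 = Xb Z t a0 + x"
      unfolding Xb_def uPa0 using finAP uAP by (simp add: x_def)
    have Ea0: "Eb Z (Suc t) a0 = Eb Z t a0 + (x - bt Z u)"
      unfolding Eb_def uPa0 using finAP uAP by (simp add: x_def)
    have Wbb: "\<And>b. b \<in> {1..k} \<Longrightarrow> b \<noteq> a0 \<Longrightarrow> Wb Z (Suc t) b = Wb Z t b"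
      unfolding Wb_def using Sb by (simp add: S'_def S_def)
    have Xbb: "\<And>b. b \<in> {1..k} \<Longrightarrow> b \<noteq> a0 \<Longrightarrow> Xb Z (Suc t) b = Xb Z t b"
      unfolding Xb_def using uPb by simp
    have Ebb: "\<And>b. b \<in> {1..k} \<Longrightarrow> b \<noteq> a0 \<Longrightarrow> Eb Z (Suc t) b = Eb Z t b"
      unfolding Eb_def using uPb by simp
    have mono1: "\<forall>a\<in>{1..k}. BB Z t a \<le> BB Z (Suc t) a"
    proof
      fix a assume "a \<in> {1..k}"
      show "BB Z t a \<le> BB Z (Suc t) a"
      proof (cases "a = a0")
        case True then show ?thesis using B(3) BBa0 BBt by simp
      next
        case False then show ?thesis using BBb by simp
      qed
    qed
    have BBnn: "0 \<le> BB Z t a0" using Ib a0(1) by blast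
    have C1: "SS Z (Suc t) \<subseteq> AA Z (Suc t)" using S'sub SA AAeq by (auto simp: S'_def S_def)
    have C2: "\<forall>s\<in>AA Z (Suc t). WW Z (Suc t) s = mw Z s \<and> 0 \<le> bt Z s \<and> bt Z s \<le> mw Z s"
    proof
      fix s assume "s \<in> AA Z (Suc t)"
      then have "s = u \<or> s \<in> AA Z t" using AAeq by auto
      then show "WW Z (Suc t) s = mw Z s \<and> 0 \<le> bt Z s \<and> bt Z s \<le> mw Z s"
      proof
        assume "s = u" then show ?thesis using W'eq btu BBnn True by (simp add: acc_def x_def)
      next
        assume "s \<in> AA Z t" then have "s \<noteq> u" using uA by auto
        then show ?thesis using W'eq Svals \<open>s \<in> AA Z t\<close> by (simp add: w_def)
      qed
    qed
    have C3: "\<forall>a\<in>{1..k}. card (SS Z (Suc t) \<inter> P a) \<le> n a \<and> BB Z (Suc t) a = threshold (d a) (n a) (WW Z (Suc t)) (SS Z (Suc t) \<inter> P a) \<and> 0 \<le> BB Z (Suc t) a"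
    proof
      fix b assume b: "b \<in> {1..k}"
      show "card (SS Z (Suc t) \<inter> P b) \<le> n b \<and> BB Z (Suc t) b = threshold (d b) (n b) (WW Z (Suc t)) (SS Z (Suc t) \<inter> P b) \<and> 0 \<le> BB Z (Suc t) b"
      proof (cases "b = a0")
        case True
        then show ?thesis using B(5) BBa0 B(3) BBt BBnn W'eq by (simp add: S'_def)
      next
        case False
        have "threshold (d b) (n b) (WW Z t) (SS Z t \<inter> P b) = threshold (d b) (n b) (WW Z (Suc t)) (SS Z t \<inter> P b)"
          using finS uS W'eq by (intro thr_cong) (auto simp: w_def)
        moreover have "card (SS Z t \<inter> P b) \<le> n b" "BB Z t b = threshold (d b) (n b) (WW Z t) (SS Z t \<inter> P b)"
          "0 \<le> BB Z t b" using Ib b by blast+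
        moreover have "SS Z (Suc t) \<inter> P b = SS Z t \<inter> P b" using Sb[OF b False] by (simp add: S'_def S_def)
        ultimately show ?thesis using BBb[OF False] by simp
      qed
    qed
    have C4: "\<forall>T0 \<subseteq> SS Z (Suc t). f {} + (\<Sum>s\<in>T0. mw Z s) \<le> f T0"
    proof (intro allI impI)
      fix T0 assume T0: "T0 \<subseteq> SS Z (Suc t)"
      have IT: "\<forall>T \<subseteq> SS Z t. f {} + (\<Sum>s\<in>T. mw Z s) \<le> f T" using I unfolding inv_def by blast
      have T0S: "T0 - {u} \<subseteq> S" using T0 S'sub by (auto simp: S'_def)
      have "T0 \<subseteq> insert u S" using T0 S'sub by (auto simp: S'_def)
      then have finT0: "finite T0" using finS by (metis S_def finite_insert finite_subset)
      show "f {} + (\<Sum>s\<in>T0. mw Z s) \<le> f T0"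
      proof (cases "u \<in> T0")
        case True
        have Sm': "S \<subseteq> {1..m}" "u \<notin> S" using SSm uS by (simp_all add: S_def)
        have e0: "(T0 - {u}) \<union> {u} = T0" using True by auto
        have M: "f (S \<union> {u}) - f S \<le> f T0 - f (T0 - {u})"
          using submod_marg[OF submod T0S Sm'(1) um Sm'(2)] unfolding e0 .
        moreover have "f {} + (\<Sum>s\<in>T0 - {u}. mw Z s) \<le> f (T0 - {u})" using IT T0S by (simp add: S_def)
        moreover have "(\<Sum>s\<in>T0. mw Z s) = mw Z u + (\<Sum>s\<in>T0 - {u}. mw Z s)"
          using True finT0 by (simp add: sum.remove)
        ultimately show ?thesis using mwu unfolding S_def by linarith
      next
        case False
        then have "T0 \<subseteq> SS Z t" using T0S by (auto simp: S_def)
        then show ?thesis using IT by simp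
      qed
    qed
    have C5: "f (AA Z (Suc t)) \<le> f {} + (\<Sum>s\<in>AA Z (Suc t). mw Z s)"
    proof -
      have "f (AA Z t \<union> {u}) - f (AA Z t) \<le> f (SS Z t \<union> {u}) - f (SS Z t)"
        by (rule submod_marg[OF submod SA AAm um uA])
      moreover have "f (AA Z t) \<le> f {} + (\<Sum>s\<in>AA Z t. mw Z s)" using I unfolding inv_def by blast
      moreover have "(\<Sum>s\<in>AA Z (Suc t). mw Z s) = mw Z u + (\<Sum>s\<in>AA Z t. mw Z s)"
        using AAeq finA uA by simp
      ultimately show ?thesis using AAeq mwu by simp
    qed
    have Ipot: "\<forall>a\<in>{1..k}. Xb Z t a + real (n a) * BB Z t a + d a * Eb Z t a \<le> (1 + c_par (d a) (n a) + d a) * Wb Z t a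
      \<and> Eb Z t a \<le> Wb Z t a \<and> (\<forall>s\<in>AA Z t \<inter> P a. g_par (d a) (n a) 1 * mw Z s \<le> BB Z t a)"
      using I unfolding inv_def by blast
    have C6: "\<forall>a\<in>{1..k}. Xb Z (Suc t) a + real (n a) * BB Z (Suc t) a + d a * Eb Z (Suc t) a \<le> (1 + c_par (d a) (n a) + d a) * Wb Z (Suc t) a
      \<and> Eb Z (Suc t) a \<le> Wb Z (Suc t) a \<and> (\<forall>s\<in>AA Z (Suc t) \<inter> P a. g_par (d a) (n a) 1 * mw Z s \<le> BB Z (Suc t) a)"
    proof
      fix b assume b: "b \<in> {1..k}"
      show "Xb Z (Suc t) b + real (n b) * BB Z (Suc t) b + d b * Eb Z (Suc t) b \<le> (1 + c_par (d b) (n b) + d b) * Wb Z (Suc t) b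
      \<and> Eb Z (Suc t) b \<le> Wb Z (Suc t) b \<and> (\<forall>s\<in>AA Z (Suc t) \<inter> P b. g_par (d b) (n b) 1 * mw Z s \<le> BB Z (Suc t) b)"
      proof (cases "b = a0")
        case True
        have P0: "Xb Z t a0 + real (n a0) * BB Z t a0 + d a0 * Eb Z t a0 \<le> (1 + c_par (d a0) (n a0) + d a0) * Wb Z t a0"
          "Eb Z t a0 \<le> Wb Z t a0" "\<forall>s\<in>AA Z t \<inter> P a0. g_par (d a0) (n a0) 1 * mw Z s \<le> BB Z t a0"
          using Ipot a0 by auto
        have B1: "(1 + c_par (d a0) (n a0) + d a0) * (Wb Z (Suc t) a0 - Wb Z t a0) - real (n a0) * (BB Z (Suc t) a0 - BB Z t a0)
           \<ge> x + d a0 * (x - BB Z t a0)"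
          using B(1) unfolding sumT sumT' BBa0[symmetric] BBt[symmetric] .
        have B2: "Wb Z (Suc t) a0 - Wb Z t a0 \<ge> x - BB Z t a0"
          using B(2) unfolding sumT sumT' BBt[symmetric] .
        have G1: "Xb Z (Suc t) a0 + real (n a0) * BB Z (Suc t) a0 + d a0 * Eb Z (Suc t) a0 \<le> (1 + c_par (d a0) (n a0) + d a0) * Wb Z (Suc t) a0"
        proof -
          have "Xb Z (Suc t) a0 + real (n a0) * BB Z (Suc t) a0 + d a0 * Eb Z (Suc t) a0
            = (Xb Z t a0 + real (n a0) * BB Z t a0 + d a0 * Eb Z t a0) + (x + d a0 * (x - BB Z t a0))
              + real (n a0) * (BB Z (Suc t) a0 - BB Z t a0)"
            unfolding Xa0 Ea0 btu by (simp add: algebra_simps)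
          also have "(1 + c_par (d a0) (n a0) + d a0) * Wb Z (Suc t) a0 = (1 + c_par (d a0) (n a0) + d a0) * Wb Z t a0
             + (1 + c_par (d a0) (n a0) + d a0) * (Wb Z (Suc t) a0 - Wb Z t a0)"
            by (simp add: algebra_simps)
          ultimately show ?thesis using P0(1) B1 by linarith
        qed
        have G2: "Eb Z (Suc t) a0 \<le> Wb Z (Suc t) a0" using P0(2) B2 Ea0 btu by simp
        have G3: "\<forall>s\<in>AA Z (Suc t) \<inter> P a0. g_par (d a0) (n a0) 1 * mw Z s \<le> BB Z (Suc t) a0"
        proof
          fix s assume "s \<in> AA Z (Suc t) \<inter> P a0"
          then have "s = u \<or> s \<in> AA Z t \<inter> P a0" using uPa0 by auto
          then show "g_par (d a0) (n a0) 1 * mw Z s \<le> BB Z (Suc t) a0"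
          proof
            assume "s = u" then show ?thesis using B(4) BBa0 by (simp add: x_def)
          next
            assume "s \<in> AA Z t \<inter> P a0"
            then show ?thesis using P0(3) mono1 a0 by (meson order_trans)
          qed
        qed
        show ?thesis using G1 G2 G3 True by simp
      next
        case False
        then show ?thesis using Ipot b Wbb[OF b False] Xbb[OF b False] Ebb[OF b False] BBb[OF False] uPb[OF b False] by simp
      qed
    qed
    have C7: "\<forall>s\<in>{1..Suc t}. \<forall>a\<in>{1..k}. BB Z (s-1) a \<le> BB Z (Suc t) a"
    proof (intro ballI)
      fix s a assume s: "s \<in> {1..Suc t}" and a: "a \<in> {1..k}"
      show "BB Z (s-1) a \<le> BB Z (Suc t) a"
      proof (cases "s = Suc t")
        case True then show ?thesis using mono1 a by simp
      next
        case False
        then have "s \<in> {1..t}" using s by auto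
        moreover have "\<forall>s\<in>{1..t}. \<forall>a\<in>{1..k}. BB Z (s-1) a \<le> BB Z t a" using I unfolding inv_def by blast
        ultimately have "BB Z (s-1) a \<le> BB Z t a" using a by blast
        then show ?thesis using mono1 a by (meson order_trans)
      qed
    qed
    show ?thesis unfolding inv_def using C1 C2 C3 C4 C5 C6 C7 by blast
  qed
qed

lemma inv_all: "t \<le> m \<Longrightarrow> inv Z t"
  by (induction t) (auto simp: inv_0 inv_Suc)

end




definition "OmS m = {Z::nat\<Rightarrow>bool. \<forall>x. x \<notin> {1..m} \<longrightarrow> Z x = False}"
definition "PIm m p = Pi_pmf {1..m} False (\<lambda>_. bernoulli_pmf p)"

lemma OmS_finite: "finite (OmS m)"
proof -
  have "OmS m = PiE_dflt {1..m} False (\<lambda>_. UNIV)" by (auto simp: OmS_def PiE_dflt_def)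
  then show ?thesis by auto
qed

lemma set_PIm: "set_pmf (PIm m p) \<subseteq> OmS m"
  unfolding PIm_def OmS_def by (rule set_Pi_pmf_subset) simp

lemma E_sum: "measure_pmf.expectation (PIm m p) h = (\<Sum>Z\<in>OmS m. pmf (PIm m p) Z * h Z)"
  using integral_measure_pmf[OF OmS_finite, of "PIm m p" h] set_PIm by auto

lemma pi_sum1: "(\<Sum>Z\<in>OmS m. pmf (PIm m p) Z) = 1"
  by (rule sum_pmf_eq_1[OF OmS_finite set_PIm])

lemma pi_prod:
  assumes "Z \<in> OmS m"
  shows "pmf (PIm m p) Z = (\<Prod>x\<in>{1..m}. pmf (bernoulli_pmf p) (Z x))"
  using assms unfolding PIm_def OmS_def by (subst pmf_Pi) auto

lemma flip:
  assumes p: "0 < p" "p < 1" and v: "v \<in> {1..m}" and h: "\<And>Z b. h (Z(v:=b)) = h Z"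
  shows "p * (\<Sum>Z\<in>OmS m. pmf (PIm m p) Z * (if Z v then 0 else h Z))
       = (1 - p) * (\<Sum>Z\<in>OmS m. pmf (PIm m p) Z * (if Z v then h Z else 0))"
proof -
  define \<pi> where "\<pi> = pmf (PIm m p)"
  define O0 where "O0 = {Z\<in>OmS m. \<not> Z v}"
  define O1 where "O1 = {Z\<in>OmS m. Z v}"
  have s0: "(\<Sum>Z\<in>OmS m. \<pi> Z * (if Z v then 0 else h Z)) = (\<Sum>Z\<in>O0. \<pi> Z * h Z)"
    unfolding O0_def sum.inter_filter[OF OmS_finite] by (rule sum.cong) auto
  have s1: "(\<Sum>Z\<in>OmS m. \<pi> Z * (if Z v then h Z else 0)) = (\<Sum>Z\<in>O1. \<pi> Z * h Z)"
    unfolding O1_def sum.inter_filter[OF OmS_finite] by (rule sum.cong) auto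
  have bij: "bij_betw (\<lambda>Z. Z(v:=True)) O0 O1"
  proof (rule bij_betw_byWitness[where f' = "\<lambda>Z. Z(v:=False)"])
    show "\<forall>a\<in>O0. a(v := True, v := False) = a" by (auto simp: O0_def fun_eq_iff)
    show "\<forall>a'\<in>O1. a'(v := False, v := True) = a'" by (auto simp: O1_def fun_eq_iff)
    show "(\<lambda>Z. Z(v := True)) ` O0 \<subseteq> O1" using v by (auto simp: O0_def O1_def OmS_def)
    show "(\<lambda>Z. Z(v := False)) ` O1 \<subseteq> O0" using v by (auto simp: O0_def O1_def OmS_def)
  qed
  have pirel: "(1 - p) * \<pi> (Z(v:=True)) = p * \<pi> Z" if Z: "Z \<in> O0" for Z
  proof -
    have Zo: "Z \<in> OmS m" "\<not> Z v" using Z by (auto simp: O0_def)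
    have Z1: "Z(v:=True) \<in> OmS m" using Zo v by (auto simp: OmS_def)
    define R where "R = (\<Prod>x\<in>{1..m} - {v}. pmf (bernoulli_pmf p) (Z x))"
    have "\<pi> Z = pmf (bernoulli_pmf p) (Z v) * R"
      unfolding \<pi>_def pi_prod[OF Zo(1)] R_def using v by (simp add: prod.remove)
    then have a: "\<pi> Z = (1 - p) * R" using Zo p by simp
    have "R = (\<Prod>x\<in>{1..m} - {v}. pmf (bernoulli_pmf p) ((Z(v:=True)) x))"
      unfolding R_def by (rule prod.cong) auto
    then have "\<pi> (Z(v:=True)) = pmf (bernoulli_pmf p) True * R"
      unfolding \<pi>_def pi_prod[OF Z1] using v by (simp add: prod.remove)
    then have b: "\<pi> (Z(v:=True)) = p * R" using p by simp
    show ?thesis unfolding a b by (simp add: algebra_simps)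
  qed
  have "(1 - p) * (\<Sum>Z\<in>O1. \<pi> Z * h Z) = (1 - p) * (\<Sum>Z\<in>O0. \<pi> (Z(v:=True)) * h (Z(v:=True)))"
    using sum.reindex_bij_betw[OF bij, of "\<lambda>Z. \<pi> Z * h Z"] by simp
  also have "\<dots> = (\<Sum>Z\<in>O0. ((1 - p) * \<pi> (Z(v:=True))) * h Z)"
    by (simp add: sum_distrib_left h mult.assoc)
  also have "\<dots> = (\<Sum>Z\<in>O0. (p * \<pi> Z) * h Z)"
    by (rule sum.cong) (auto simp: pirel)
  also have "\<dots> = p * (\<Sum>Z\<in>O0. \<pi> Z * h Z)"
    by (simp add: sum_distrib_left mult.assoc)
  finally show ?thesis using s0 s1 by (simp add: \<pi>_def)
qed

lemma prob_true:
  assumes p: "0 < p" "p < 1" and v: "v \<in> {1..m}"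
  shows "(\<Sum>Z\<in>OmS m. pmf (PIm m p) Z * (if Z v then 1 else 0)) = p"
proof -
  define A where "A = (\<Sum>Z\<in>OmS m. pmf (PIm m p) Z * (if Z v then 1 else 0))"
  define B where "B = (\<Sum>Z\<in>OmS m. pmf (PIm m p) Z * (if Z v then 0 else 1))"
  have F: "p * B = (1 - p) * A"
    using flip[OF p v, of "\<lambda>_. 1"] by (simp add: A_def B_def)
  have "B + A = (\<Sum>Z\<in>OmS m. pmf (PIm m p) Z)"
    unfolding A_def B_def sum.distrib[symmetric] by (rule sum.cong) auto
  then have "B = 1 - A" using pi_sum1 by simp
  then have "p * (1 - A) = (1 - p) * A" using F by simp
  then have "p = A" by (simp add: algebra_simps)
  then show ?thesis by (simp add: A_def)
qed




lemma union_bound: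
  assumes sm: "submodular_on V f" and fB: "finite B" and A: "A \<subseteq> V" and B: "B \<subseteq> V"
  shows "f (A \<union> B) \<le> f A + (\<Sum>v\<in>B - A. f (A \<union> {v}) - f A)"
  using fB B
proof (induction B rule: finite_induct)
  case empty then show ?case by simp
next
  case (insert b B)
  have IH: "f (A \<union> B) \<le> f A + (\<Sum>v\<in>B - A. f (A \<union> {v}) - f A)" using insert by auto
  show ?case
  proof (cases "b \<in> A \<union> B")
    case True
    then have "A \<union> insert b B = A \<union> B" by auto
    moreover have "insert b B - A = B - A \<or> (b \<notin> A \<and> b \<in> B)" using True by auto
    then have "insert b B - A = B - A" using insert.hyps(2) True by auto
    ultimately show ?thesis using IH by simp
  next
    case False
    have M: "f (A \<union> B \<union> {b}) - f (A \<union> B) \<le> f (A \<union> {b}) - f A"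
      using submod_marg[OF sm, of A "A \<union> B" b] A insert.prems False by auto
    have eqU: "A \<union> insert b B = A \<union> B \<union> {b}" by auto
    have S: "(\<Sum>v\<in>insert b B - A. f (A \<union> {v}) - f A) = (f (A \<union> {b}) - f A) + (\<Sum>v\<in>B - A. f (A \<union> {v}) - f A)"
    proof -
      have "insert b B - A = insert b (B - A)" using False by auto
      then show ?thesis using insert.hyps False by simp
    qed
    show ?thesis unfolding eqU S using M IH by linarith
  qed
qed

context alg_setting
begin

lemma sum_blocks:
  assumes "X \<subseteq> {1..m}"
  shows "sum h X = (\<Sum>a\<in>{1..k}. sum h (X \<inter> P a))"
proof -
  have "X = (\<Union>a\<in>{1..k}. X \<inter> P a)" using assms part_cover by blast
  then have "sum h X = sum h (\<Union>a\<in>{1..k}. X \<inter> P a)" by simp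
  also have "\<dots> = (\<Sum>a\<in>{1..k}. sum h (X \<inter> P a))"
  proof (rule sum.UNION_disjoint)
    show "\<forall>i\<in>{1..k}. finite (X \<inter> P i)" using assms finite_subset by auto
    show "\<forall>i\<in>{1..k}. \<forall>j\<in>{1..k}. i \<noteq> j \<longrightarrow> X \<inter> P i \<inter> (X \<inter> P j) = {}" using part_disj by blast
  qed simp
  finally show ?thesis .
qed

lemma inv_m: "inv Z m" by (rule inv_all) simp

lemma bt_le_final:
  assumes "a \<in> {1..k}" "v \<in> P a" "v \<in> {1..m}"
  shows "bt Z v \<le> BB Z m a"
proof -
  have "\<forall>s\<in>{1..m}. \<forall>a\<in>{1..k}. BB Z (s-1) a \<le> BB Z m a" using inv_m unfolding inv_def by blast
  then show ?thesis using assms blk_eq[OF assms(1,2)] by (simp add: bt_def)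
qed

lemma block_final:
  assumes p: "0 < p" "p < 1" and a: "a \<in> {1..k}" and Ss: "Sstar \<subseteq> {1..m}" "card (Sstar \<inter> P a) \<le> n a"
  shows "Xb Z m a + (\<Sum>v\<in>Sstar \<inter> P a - AA Z m. bt Z v)
          + (1/p - 1) * (\<Sum>v\<in>Sstar \<inter> P a \<inter> AA Z m. mw Z v - bt Z v)
        \<le> Q_par p (d a) (n a) * Wb Z m a"
proof -
  define \<beta> where "\<beta> = BB Z m a"
  define N where "N = n a"
  define c where "c = c_par (d a) (n a)"
  define dd where "dd = d a"
  define \<alpha> where "\<alpha> = 1/p - 1 - c / real N"
  define R where "R = Sstar \<inter> P a - AA Z m"
  define Ob where "Ob = Sstar \<inter> P a \<inter> AA Z m"
  have I: "inv Z m" by (rule inv_m)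
  have Svals: "\<forall>s\<in>AA Z m. WW Z m s = mw Z s \<and> 0 \<le> bt Z s \<and> bt Z s \<le> mw Z s" using I unfolding inv_def by blast
  have SA: "SS Z m \<subseteq> AA Z m" using I unfolding inv_def by blast
  have Ib: "0 \<le> BB Z m a" using I a unfolding inv_def by blast
  have Ipot: "Xb Z m a + real (n a) * BB Z m a + d a * Eb Z m a \<le> (1 + c_par (d a) (n a) + d a) * Wb Z m a"
    "Eb Z m a \<le> Wb Z m a" "\<forall>s\<in>AA Z m \<inter> P a. g_par (d a) (n a) 1 * mw Z s \<le> BB Z m a"
    using I a unfolding inv_def by blast+
  have N1: "N \<ge> 1" "dd > 0" using budgets d_pos a by (auto simp: N_def dd_def)
  have cpos: "c > 0" using c_rel(2)[OF N1] by (simp add: c_def N_def dd_def)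
  have g1: "g_par (d a) (n a) 1 = c / real N" by (simp add: g_par_def c_def N_def)
  have finS: "finite Sstar" using Ss finite_subset by blast
  have finR: "finite R" "finite Ob" using finS by (auto simp: R_def Ob_def)
  have sumR: "(\<Sum>v\<in>R. bt Z v) \<le> real (card R) * \<beta>"
  proof -
    have "\<forall>v\<in>R. bt Z v \<le> \<beta>" using bt_le_final[OF a] Ss by (auto simp: R_def \<beta>_def)
    then show ?thesis using sum_bounded_above[of R "bt Z" \<beta>] by auto
  qed
  have eO: "\<forall>v\<in>Ob. (1/p - 1) * (mw Z v - bt Z v) \<le> max \<alpha> 0 * (mw Z v - bt Z v) + \<beta>"
  proof
    fix v assume v: "v \<in> Ob"
    then have vA: "v \<in> AA Z m \<inter> P a" by (auto simp: Ob_def)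
    then have b: "0 \<le> bt Z v" "bt Z v \<le> mw Z v" using Svals by auto
    have "g_par (d a) (n a) 1 * mw Z v \<le> \<beta>" using Ipot(3) vA by (simp add: \<beta>_def)
    then have m1: "c / real N * mw Z v \<le> \<beta>" using g1 by simp
    have "c / real N * (mw Z v - bt Z v) \<le> c / real N * mw Z v"
      using b cpos N1 by (intro mult_left_mono) auto
    moreover have "\<alpha> * (mw Z v - bt Z v) \<le> max \<alpha> 0 * (mw Z v - bt Z v)"
      using b by (intro mult_right_mono) auto
    moreover have "(1/p - 1) * (mw Z v - bt Z v) = \<alpha> * (mw Z v - bt Z v) + c / real N * (mw Z v - bt Z v)"
      by (simp add: \<alpha>_def algebra_simps)
    ultimately show "(1/p - 1) * (mw Z v - bt Z v) \<le> max \<alpha> 0 * (mw Z v - bt Z v) + \<beta>" using m1 by linarith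
  qed
  have sumO: "(1/p - 1) * (\<Sum>v\<in>Ob. mw Z v - bt Z v) \<le> max \<alpha> 0 * (\<Sum>v\<in>Ob. mw Z v - bt Z v) + real (card Ob) * \<beta>"
  proof -
    have "(\<Sum>v\<in>Ob. (1/p - 1) * (mw Z v - bt Z v)) \<le> (\<Sum>v\<in>Ob. max \<alpha> 0 * (mw Z v - bt Z v) + \<beta>)"
      using eO by (intro sum_mono) auto
    then show ?thesis by (simp add: sum_distrib_left sum.distrib)
  qed
  have cardRO: "card R + card Ob \<le> N"
  proof -
    have "R \<union> Ob = Sstar \<inter> P a" "R \<inter> Ob = {}" by (auto simp: R_def Ob_def)
    then have "card R + card Ob = card (Sstar \<inter> P a)" using finR by (metis card_Un_disjoint)
    then show ?thesis using Ss by (simp add: N_def)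
  qed
  have Enn: "\<forall>v\<in>AA Z m \<inter> P a. 0 \<le> mw Z v - bt Z v" using Svals by auto
  have sumOE: "(\<Sum>v\<in>Ob. mw Z v - bt Z v) \<le> Eb Z m a"
  proof -
    have "finite (AA Z m \<inter> P a)" using AA_sub[of Z m] finite_subset by (metis finite_Int finite_atLeastAtMost)
    then show ?thesis unfolding Eb_def using Enn by (intro sum_mono2) (auto simp: Ob_def)
  qed
  have Enn2: "Eb Z m a \<ge> 0" unfolding Eb_def using Enn by (intro sum_nonneg) auto
  have Wnn: "Wb Z m a \<ge> 0" unfolding Wb_def using Svals SA by (intro sum_nonneg) force
  have step1: "Xb Z m a + (\<Sum>v\<in>R. bt Z v) + (1/p - 1) * (\<Sum>v\<in>Ob. mw Z v - bt Z v)
      \<le> Xb Z m a + real N * \<beta> + max \<alpha> 0 * Eb Z m a"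
  proof -
    have "(real (card R) + real (card Ob)) * \<beta> \<le> real N * \<beta>"
      using cardRO Ib by (intro mult_right_mono) (auto simp: \<beta>_def)
    moreover have "max \<alpha> 0 * (\<Sum>v\<in>Ob. mw Z v - bt Z v) \<le> max \<alpha> 0 * Eb Z m a"
      using sumOE by (intro mult_left_mono) auto
    ultimately show ?thesis using sumR sumO by (simp add: algebra_simps)
  qed
  have Qdef: "Q_par p (d a) (n a) = max (1 + c + dd) ((1 - 1 / real N) * c + 1 / p)"
    by (simp add: Q_par_def c_def dd_def N_def)
  have J1: "Xb Z m a + real N * \<beta> + dd * Eb Z m a \<le> (1 + c + dd) * Wb Z m a"
    using Ipot(1) by (simp add: \<beta>_def N_def c_def dd_def)
  have step2: "Xb Z m a + real N * \<beta> + max \<alpha> 0 * Eb Z m a \<le> Q_par p (d a) (n a) * Wb Z m a"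
  proof (cases "max \<alpha> 0 \<le> dd")
    case True
    then have "max \<alpha> 0 * Eb Z m a \<le> dd * Eb Z m a" using Enn2 by (intro mult_right_mono) auto
    moreover have "(1 + c + dd) * Wb Z m a \<le> Q_par p (d a) (n a) * Wb Z m a"
      unfolding Qdef using Wnn by (intro mult_right_mono) auto
    ultimately show ?thesis using J1 by linarith
  next
    case False
    then have al: "max \<alpha> 0 = \<alpha>" "\<alpha> > dd" using N1 by auto
    have "(\<alpha> - dd) * Eb Z m a \<le> (\<alpha> - dd) * Wb Z m a" using Ipot(2) al by (intro mult_left_mono) auto
    moreover have "(1 + c + dd) * Wb Z m a + (\<alpha> - dd) * Wb Z m a = ((1 - 1 / real N) * c + 1 / p) * Wb Z m a"
      by (simp add: \<alpha>_def algebra_simps)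
    moreover have "((1 - 1 / real N) * c + 1 / p) * Wb Z m a \<le> Q_par p (d a) (n a) * Wb Z m a"
      unfolding Qdef using Wnn by (intro mult_right_mono) auto
    moreover have "\<alpha> * Eb Z m a = dd * Eb Z m a + (\<alpha> - dd) * Eb Z m a" by (simp add: algebra_simps)
    ultimately show ?thesis using J1 unfolding al(1) by linarith
  qed
  show ?thesis using step1 step2 by (simp add: R_def Ob_def)
qed

lemma Wb_nn: "a \<in> {1..k} \<Longrightarrow> Wb Z m a \<ge> 0"
proof -
  have Svals: "\<forall>s\<in>AA Z m. WW Z m s = mw Z s \<and> 0 \<le> bt Z s \<and> bt Z s \<le> mw Z s" using inv_m unfolding inv_def by blast
  have SA: "SS Z m \<subseteq> AA Z m" using inv_m unfolding inv_def by blast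
  show ?thesis unfolding Wb_def using Svals SA by (intro sum_nonneg) force
qed

lemma Q_ge:
  assumes k1: "k \<ge> 1" and p: "0 < p" "p < 1"
  shows "\<And>a. a \<in> {1..k} \<Longrightarrow> Q_par p (d a) (n a) \<le> (MAX a\<in>{1..k}. Q_par p (d a) (n a))"
    and "(MAX a\<in>{1..k}. Q_par p (d a) (n a)) \<ge> 1"
proof -
  show le: "\<And>a. a \<in> {1..k} \<Longrightarrow> Q_par p (d a) (n a) \<le> (MAX a\<in>{1..k}. Q_par p (d a) (n a))"
    by (rule Max_ge) auto
  have "1 \<in> {1..k}" using k1 by simp
  have "c_par (d 1) (n 1) > 0" using c_rel(2)[of "n 1" "d 1"] budgets d_pos \<open>1 \<in> {1..k}\<close> by auto
  moreover have "d 1 > 0" using d_pos \<open>1 \<in> {1..k}\<close> by auto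
  ultimately have "Q_par p (d 1) (n 1) \<ge> 1" unfolding Q_par_def by simp
  then show "(MAX a\<in>{1..k}. Q_par p (d a) (n a)) \<ge> 1" using le[OF \<open>1 \<in> {1..k}\<close>] by simp
qed

lemma final_det:
  assumes k1: "k \<ge> 1" and p: "0 < p" "p < 1" and Ss: "Sstar \<subseteq> {1..m}" "\<forall>a\<in>{1..k}. card (Sstar \<inter> P a) \<le> n a"
  shows "(\<Sum>s\<in>AA Z m. mw Z s) + (\<Sum>v\<in>Sstar - AA Z m. bt Z v) + (1/p - 1) * (\<Sum>v\<in>Sstar \<inter> AA Z m. mw Z v - bt Z v)
     \<le> (MAX a\<in>{1..k}. Q_par p (d a) (n a)) * (\<Sum>s\<in>SS Z m. mw Z s)"
proof -
  define Q where "Q = (MAX a\<in>{1..k}. Q_par p (d a) (n a))"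
  have AAm: "AA Z m \<subseteq> {1..m}" using AA_sub by simp
  have SSm: "SS Z m \<subseteq> {1..m}" using AAm inv_m unfolding inv_def by blast
  have e1: "(\<Sum>s\<in>AA Z m. mw Z s) = (\<Sum>a\<in>{1..k}. Xb Z m a)"
    unfolding Xb_def by (rule sum_blocks[OF AAm])
  have e2: "(\<Sum>v\<in>Sstar - AA Z m. bt Z v) = (\<Sum>a\<in>{1..k}. \<Sum>v\<in>Sstar \<inter> P a - AA Z m. bt Z v)"
  proof -
    have "(\<Sum>v\<in>Sstar - AA Z m. bt Z v) = (\<Sum>a\<in>{1..k}. \<Sum>v\<in>(Sstar - AA Z m) \<inter> P a. bt Z v)"
      by (rule sum_blocks) (use Ss in auto)
    moreover have "\<And>a. (Sstar - AA Z m) \<inter> P a = Sstar \<inter> P a - AA Z m" by auto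
    ultimately show ?thesis by simp
  qed
  have e3: "(\<Sum>v\<in>Sstar \<inter> AA Z m. mw Z v - bt Z v) = (\<Sum>a\<in>{1..k}. \<Sum>v\<in>Sstar \<inter> P a \<inter> AA Z m. mw Z v - bt Z v)"
  proof -
    have "(\<Sum>v\<in>Sstar \<inter> AA Z m. mw Z v - bt Z v) = (\<Sum>a\<in>{1..k}. \<Sum>v\<in>(Sstar \<inter> AA Z m) \<inter> P a. mw Z v - bt Z v)"
      by (rule sum_blocks) (use Ss in auto)
    moreover have "\<And>a. (Sstar \<inter> AA Z m) \<inter> P a = Sstar \<inter> P a \<inter> AA Z m" by auto
    ultimately show ?thesis by simp
  qed
  have e4: "(\<Sum>s\<in>SS Z m. mw Z s) = (\<Sum>a\<in>{1..k}. Wb Z m a)"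
    unfolding Wb_def by (rule sum_blocks[OF SSm])
  have "(\<Sum>s\<in>AA Z m. mw Z s) + (\<Sum>v\<in>Sstar - AA Z m. bt Z v) + (1/p - 1) * (\<Sum>v\<in>Sstar \<inter> AA Z m. mw Z v - bt Z v)
     = (\<Sum>a\<in>{1..k}. Xb Z m a + (\<Sum>v\<in>Sstar \<inter> P a - AA Z m. bt Z v)
          + (1/p - 1) * (\<Sum>v\<in>Sstar \<inter> P a \<inter> AA Z m. mw Z v - bt Z v))"
    unfolding e1 e2 e3 by (simp add: sum.distrib sum_distrib_left)
  also have "\<dots> \<le> (\<Sum>a\<in>{1..k}. Q_par p (d a) (n a) * Wb Z m a)"
    by (intro sum_mono block_final[OF p _ Ss(1)]) (use Ss(2) in auto)
  also have "\<dots> \<le> (\<Sum>a\<in>{1..k}. Q * Wb Z m a)"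
    by (intro sum_mono mult_right_mono) (auto simp: Q_def Q_ge[OF k1 p] Wb_nn)
  also have "\<dots> = Q * (\<Sum>s\<in>SS Z m. mw Z s)" unfolding e4 by (simp add: sum_distrib_left)
  finally show ?thesis by (simp add: Q_def)
qed

lemma mw_local: "mw (Z(v:=b)) v = mw Z v" "bt (Z(v:=b)) v = bt Z v"
proof -
  have "st (Z(v:=b)) (v-1) = st Z (v-1)" by (rule st_local) auto
  then show "mw (Z(v:=b)) v = mw Z v" "bt (Z(v:=b)) v = bt Z v"
    by (simp_all add: mw_def bt_def SS_def BB_def)
qed

lemma main_bound:
  assumes k1: "k \<ge> 1" and p: "0 < p" "p < 1" and Ss: "Sstar \<subseteq> {1..m}" "\<forall>a\<in>{1..k}. card (Sstar \<inter> P a) \<le> n a"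
    and fnn: "\<forall>A. A \<subseteq> {1..m} \<longrightarrow> f A \<ge> 0"
  shows "(1 - p) * f Sstar \<le> (MAX a\<in>{1..k}. Q_par p (d a) (n a)) * (\<Sum>Z\<in>OmS m. pmf (PIm m p) Z * f (SS Z m))"
proof -
  define Q where "Q = (MAX a\<in>{1..k}. Q_par p (d a) (n a))"
  define \<pi> where "\<pi> = pmf (PIm m p)"
  define \<Omega> where "\<Omega> = OmS m"
  define ind where "ind = (\<lambda>Z v. if Z v then 0 else max 0 (mw Z v - bt Z v))"
  define e where "e = (\<lambda>Z v. if v \<in> AA Z m then mw Z v - bt Z v else 0)"
  define D where "D = (\<lambda>Z. (\<Sum>s\<in>AA Z m. mw Z s) + (\<Sum>v\<in>Sstar - AA Z m. bt Z v))"
  have fO: "finite \<Omega>" by (simp add: \<Omega>_def OmS_finite)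
  have pnn: "\<forall>Z\<in>\<Omega>. \<pi> Z \<ge> 0" by (simp add: \<pi>_def)
  have p1: "sum \<pi> \<Omega> = 1" using pi_sum1 by (simp add: \<pi>_def \<Omega>_def)
  have finS: "finite Sstar" using Ss finite_subset by blast
  have Q1: "Q \<ge> 1" using Q_ge(2)[OF k1 p] by (simp add: Q_def)
  have f0: "f {} \<ge> 0" using fnn by simp
  have stepa: "(\<Sum>Z\<in>\<Omega>. \<pi> Z * f (Sstar \<union> AA Z m)) \<ge> (1 - p) * f Sstar"
  proof -
    have "(\<Sum>Z\<in>\<Omega>. \<pi> Z * f (Sstar \<union> AA Z m)) \<ge> (1 - p) * f (Sstar \<union> {}) + 0 * f (Sstar \<union> {1..m})"
    proof (rule rand_set_aux[OF fO pnn p1, where U0 = "{1..m}"])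
      show "\<forall>X. X \<subseteq> {1..m} \<longrightarrow> f (Sstar \<union> X) \<ge> 0"
      proof (intro allI impI)
        fix X assume "X \<subseteq> {1..m}"
        then have "Sstar \<union> X \<subseteq> {1..m}" using Ss by auto
        then show "f (Sstar \<union> X) \<ge> 0" using fnn by blast
      qed
      show "\<forall>X Y. X \<subseteq> {1..m} \<longrightarrow> Y \<subseteq> {1..m} \<longrightarrow> f (Sstar \<union> (X \<union> Y)) + f (Sstar \<union> (X \<inter> Y)) \<le> f (Sstar \<union> X) + f (Sstar \<union> Y)"
      proof (intro allI impI)
        fix X Y assume XY: "X \<subseteq> {1..m}" "Y \<subseteq> {1..m}"
        have "f ((Sstar \<union> X) \<union> (Sstar \<union> Y)) + f ((Sstar \<union> X) \<inter> (Sstar \<union> Y)) \<le> f (Sstar \<union> X) + f (Sstar \<union> Y)"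
        proof -
          have H: "\<And>A B. A \<subseteq> {1..m} \<Longrightarrow> B \<subseteq> {1..m} \<Longrightarrow> f (A \<union> B) + f (A \<inter> B) \<le> f A + f B"
            using submod unfolding submodular_on_def by blast
          have "Sstar \<union> X \<subseteq> {1..m}" "Sstar \<union> Y \<subseteq> {1..m}" using XY Ss by auto
          then show ?thesis by (rule H)
        qed
        moreover have "(Sstar \<union> X) \<union> (Sstar \<union> Y) = Sstar \<union> (X \<union> Y)" "(Sstar \<union> X) \<inter> (Sstar \<union> Y) = Sstar \<union> (X \<inter> Y)" by auto
        ultimately show "f (Sstar \<union> (X \<union> Y)) + f (Sstar \<union> (X \<inter> Y)) \<le> f (Sstar \<union> X) + f (Sstar \<union> Y)" by simp
      qed
      show "finite {1..m}" by simp
      show "{1..m} \<subseteq> {1..m}" by simp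
      show "\<forall>Z\<in>\<Omega>. AA Z m \<subseteq> {1..m}" using AA_sub by auto
      show "0 \<le> (0::real)" by simp
      show "0 \<le> p" using p by simp
      show "\<forall>i\<in>{1..m}. 0 \<le> (\<Sum>Z\<in>\<Omega>. \<pi> Z * (if i \<in> AA Z m then 1 else 0)) \<and> (\<Sum>Z\<in>\<Omega>. \<pi> Z * (if i \<in> AA Z m then 1 else 0)) \<le> p"
      proof
        fix i assume i: "i \<in> {1..m}"
        have "(\<Sum>Z\<in>\<Omega>. \<pi> Z * (if i \<in> AA Z m then 1 else 0)) \<le> (\<Sum>Z\<in>\<Omega>. \<pi> Z * (if Z i then 1 else 0))"
          using pnn by (intro sum_mono mult_left_mono) (auto simp: AA_def acc_def)
        also have "\<dots> = p" using prob_true[OF p i] by (simp add: \<pi>_def \<Omega>_def)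
        finally show "0 \<le> (\<Sum>Z\<in>\<Omega>. \<pi> Z * (if i \<in> AA Z m then 1 else 0)) \<and> (\<Sum>Z\<in>\<Omega>. \<pi> Z * (if i \<in> AA Z m then 1 else 0)) \<le> p"
          using pnn by (auto intro: sum_nonneg)
      qed
    qed
    then show ?thesis by simp
  qed
  have stepb: "f (Sstar \<union> AA Z m) \<le> f {} + D Z + (\<Sum>v\<in>Sstar. ind Z v)" for Z
  proof -
    define A where "A = AA Z m"
    have Am: "A \<subseteq> {1..m}" using AA_sub by (simp add: A_def)
    have U: "f (A \<union> Sstar) \<le> f A + (\<Sum>v\<in>Sstar - A. f (A \<union> {v}) - f A)"
      by (rule union_bound[OF submod finS Am Ss(1)])
    have mv: "f (A \<union> {v}) - f A \<le> bt Z v + ind Z v" if v: "v \<in> Sstar - A" for v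
    proof -
      have vm: "v \<in> {1..m}" using v Ss by auto
      have "inv Z (v-1)" by (rule inv_all) (use vm in auto)
      then have "SS Z (v-1) \<subseteq> AA Z (v-1)" unfolding inv_def by blast
      moreover have "AA Z (v-1) \<subseteq> A" using vm by (auto simp: A_def AA_def)
      ultimately have sub: "SS Z (v-1) \<subseteq> A" by blast
      have vA: "v \<notin> A" using v by simp
      have "f (A \<union> {v}) - f A \<le> mw Z v"
        using submod_marg[OF submod sub Am vm vA] by (simp add: mw_def)
      moreover have "\<not> acc Z v" using vA vm by (simp add: A_def AA_def)
      then have "mw Z v \<le> bt Z v + ind Z v" by (auto simp: acc_def ind_def)
      ultimately show ?thesis by simp
    qed
    have indnn: "\<And>v. ind Z v \<ge> 0" by (simp add: ind_def)
    have "(\<Sum>v\<in>Sstar - A. f (A \<union> {v}) - f A) \<le> (\<Sum>v\<in>Sstar - A. bt Z v + ind Z v)"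
      using mv by (intro sum_mono) auto
    also have "\<dots> = (\<Sum>v\<in>Sstar - A. bt Z v) + (\<Sum>v\<in>Sstar - A. ind Z v)" by (simp add: sum.distrib)
    also have "(\<Sum>v\<in>Sstar - A. ind Z v) \<le> (\<Sum>v\<in>Sstar. ind Z v)"
      using finS indnn by (intro sum_mono2) auto
    finally have X: "(\<Sum>v\<in>Sstar - A. f (A \<union> {v}) - f A) \<le> (\<Sum>v\<in>Sstar - A. bt Z v) + (\<Sum>v\<in>Sstar. ind Z v)" by simp
    have "f A \<le> f {} + (\<Sum>s\<in>A. mw Z s)" using inv_m unfolding inv_def A_def by blast
    moreover have "A \<union> Sstar = Sstar \<union> A" by auto
    ultimately show ?thesis using U X by (simp add: D_def A_def)
  qed
  have stepc: "(\<Sum>Z\<in>\<Omega>. \<pi> Z * ind Z v) = (1/p - 1) * (\<Sum>Z\<in>\<Omega>. \<pi> Z * e Z v)" if v: "v \<in> Sstar" for v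
  proof -
    have vm: "v \<in> {1..m}" using v Ss by auto
    have F: "p * (\<Sum>Z\<in>\<Omega>. \<pi> Z * (if Z v then 0 else max 0 (mw Z v - bt Z v)))
       = (1 - p) * (\<Sum>Z\<in>\<Omega>. \<pi> Z * (if Z v then max 0 (mw Z v - bt Z v) else 0))"
      unfolding \<pi>_def \<Omega>_def by (rule flip[OF p vm]) (simp add: mw_local)
    have "(\<Sum>Z\<in>\<Omega>. \<pi> Z * (if Z v then max 0 (mw Z v - bt Z v) else 0)) = (\<Sum>Z\<in>\<Omega>. \<pi> Z * e Z v)"
      using vm by (intro sum.cong) (auto simp: e_def AA_def acc_def)
    then have "p * (\<Sum>Z\<in>\<Omega>. \<pi> Z * ind Z v) = (1 - p) * (\<Sum>Z\<in>\<Omega>. \<pi> Z * e Z v)"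
      using F by (simp add: ind_def)
    then show ?thesis using p by (simp add: field_simps)
  qed
  have "(\<Sum>Z\<in>\<Omega>. \<pi> Z * f (Sstar \<union> AA Z m)) \<le> (\<Sum>Z\<in>\<Omega>. \<pi> Z * (f {} + D Z + (\<Sum>v\<in>Sstar. ind Z v)))"
    using pnn stepb by (intro sum_mono mult_left_mono) auto
  also have "\<dots> = f {} * sum \<pi> \<Omega> + (\<Sum>Z\<in>\<Omega>. \<pi> Z * D Z) + (\<Sum>v\<in>Sstar. \<Sum>Z\<in>\<Omega>. \<pi> Z * ind Z v)"
  proof -
    have "(\<Sum>Z\<in>\<Omega>. \<pi> Z * (f {} + D Z + (\<Sum>v\<in>Sstar. ind Z v)))
        = (\<Sum>Z\<in>\<Omega>. \<pi> Z * f {} + \<pi> Z * D Z + (\<Sum>v\<in>Sstar. \<pi> Z * ind Z v))"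
      by (rule sum.cong) (simp_all add: distrib_left sum_distrib_left)
    also have "\<dots> = (\<Sum>Z\<in>\<Omega>. \<pi> Z * f {}) + (\<Sum>Z\<in>\<Omega>. \<pi> Z * D Z) + (\<Sum>Z\<in>\<Omega>. \<Sum>v\<in>Sstar. \<pi> Z * ind Z v)"
      by (simp only: sum.distrib)
    also have "(\<Sum>Z\<in>\<Omega>. \<Sum>v\<in>Sstar. \<pi> Z * ind Z v) = (\<Sum>v\<in>Sstar. \<Sum>Z\<in>\<Omega>. \<pi> Z * ind Z v)"
      by (rule sum.swap)
    also have "(\<Sum>Z\<in>\<Omega>. \<pi> Z * f {}) = f {} * sum \<pi> \<Omega>" by (simp add: sum_distrib_left mult.commute)
    finally show ?thesis .
  qed
  also have "(\<Sum>v\<in>Sstar. \<Sum>Z\<in>\<Omega>. \<pi> Z * ind Z v) = (\<Sum>v\<in>Sstar. (1/p - 1) * (\<Sum>Z\<in>\<Omega>. \<pi> Z * e Z v))"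
    by (rule sum.cong) (auto simp: stepc)
  also have "\<dots> = (\<Sum>Z\<in>\<Omega>. \<pi> Z * ((1/p - 1) * (\<Sum>v\<in>Sstar \<inter> AA Z m. mw Z v - bt Z v)))"
  proof -
    have "\<And>Z. (\<Sum>v\<in>Sstar. e Z v) = (\<Sum>v\<in>Sstar \<inter> AA Z m. mw Z v - bt Z v)"
      using finS by (simp add: e_def sum.inter_restrict[symmetric] Int_def)
    have "(\<Sum>v\<in>Sstar. (1/p - 1) * (\<Sum>Z\<in>\<Omega>. \<pi> Z * e Z v)) = (1/p - 1) * (\<Sum>v\<in>Sstar. \<Sum>Z\<in>\<Omega>. \<pi> Z * e Z v)"
      by (simp only: sum_distrib_left)
    also have "(\<Sum>v\<in>Sstar. \<Sum>Z\<in>\<Omega>. \<pi> Z * e Z v) = (\<Sum>Z\<in>\<Omega>. \<Sum>v\<in>Sstar. \<pi> Z * e Z v)"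
      by (rule sum.swap)
    also have "\<dots> = (\<Sum>Z\<in>\<Omega>. \<pi> Z * (\<Sum>v\<in>Sstar \<inter> AA Z m. mw Z v - bt Z v))"
      by (rule sum.cong) (simp_all add: sum_distrib_left[symmetric] \<open>\<And>Z. (\<Sum>v\<in>Sstar. e Z v) = _\<close>)
    finally show ?thesis by (simp add: sum_distrib_left algebra_simps)
  qed
  finally have L0: "(\<Sum>Z\<in>\<Omega>. \<pi> Z * f (Sstar \<union> AA Z m)) \<le> f {} * sum \<pi> \<Omega> + (\<Sum>Z\<in>\<Omega>. \<pi> Z * D Z)
     + (\<Sum>Z\<in>\<Omega>. \<pi> Z * ((1/p - 1) * (\<Sum>v\<in>Sstar \<inter> AA Z m. mw Z v - bt Z v)))" .
  have spl: "(\<Sum>Z\<in>\<Omega>. \<pi> Z * (D Z + (1/p - 1) * (\<Sum>v\<in>Sstar \<inter> AA Z m. mw Z v - bt Z v)))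
     = (\<Sum>Z\<in>\<Omega>. \<pi> Z * D Z) + (\<Sum>Z\<in>\<Omega>. \<pi> Z * ((1/p - 1) * (\<Sum>v\<in>Sstar \<inter> AA Z m. mw Z v - bt Z v)))"
    by (simp only: distrib_left sum.distrib)
  have L: "(\<Sum>Z\<in>\<Omega>. \<pi> Z * f (Sstar \<union> AA Z m)) \<le> f {} +
      (\<Sum>Z\<in>\<Omega>. \<pi> Z * (D Z + (1/p - 1) * (\<Sum>v\<in>Sstar \<inter> AA Z m. mw Z v - bt Z v)))"
    using L0 unfolding p1 spl by simp
  have "(\<Sum>Z\<in>\<Omega>. \<pi> Z * (D Z + (1/p - 1) * (\<Sum>v\<in>Sstar \<inter> AA Z m. mw Z v - bt Z v)))
      \<le> (\<Sum>Z\<in>\<Omega>. \<pi> Z * (Q * (f (SS Z m) - f {})))"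
  proof (intro sum_mono mult_left_mono)
    fix Z assume "Z \<in> \<Omega>"
    have "D Z + (1/p - 1) * (\<Sum>v\<in>Sstar \<inter> AA Z m. mw Z v - bt Z v) \<le> Q * (\<Sum>s\<in>SS Z m. mw Z s)"
      using final_det[OF k1 p Ss] by (simp add: D_def Q_def)
    also have "(\<Sum>s\<in>SS Z m. mw Z s) \<le> f (SS Z m) - f {}"
    proof -
      have "\<forall>T \<subseteq> SS Z m. f {} + (\<Sum>s\<in>T. mw Z s) \<le> f T" using inv_m unfolding inv_def by blast
      then show ?thesis by auto
    qed
    then have "Q * (\<Sum>s\<in>SS Z m. mw Z s) \<le> Q * (f (SS Z m) - f {})" using Q1 by (intro mult_left_mono) auto
    finally show "D Z + (1/p - 1) * (\<Sum>v\<in>Sstar \<inter> AA Z m. mw Z v - bt Z v) \<le> Q * (f (SS Z m) - f {})" .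
  qed (use pnn in auto)
  also have "\<dots> = Q * (\<Sum>Z\<in>\<Omega>. \<pi> Z * f (SS Z m)) - Q * f {}"
  proof -
    have "(\<Sum>Z\<in>\<Omega>. \<pi> Z * (Q * (f (SS Z m) - f {}))) = (\<Sum>Z\<in>\<Omega>. Q * (\<pi> Z * f (SS Z m)) - (Q * f {}) * \<pi> Z)"
      by (rule sum.cong) (simp_all add: algebra_simps)
    also have "\<dots> = Q * (\<Sum>Z\<in>\<Omega>. \<pi> Z * f (SS Z m)) - (Q * f {}) * sum \<pi> \<Omega>"
      by (simp only: sum_subtractf sum_distrib_left)
    finally show ?thesis using p1 by simp
  qed
  finally have "(\<Sum>Z\<in>\<Omega>. \<pi> Z * f (Sstar \<union> AA Z m)) \<le> f {} + Q * (\<Sum>Z\<in>\<Omega>. \<pi> Z * f (SS Z m)) - Q * f {}"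
    using L by simp
  moreover have "f {} \<le> Q * f {}" using Q1 f0 by (simp add: mult_le_cancel_right1)
  ultimately show ?thesis using stepa by (simp add: Q_def \<pi>_def \<Omega>_def)
qed

end



theorem mainTheorem12:
  fixes f :: "nat set \<Rightarrow> real" and m k :: nat and P :: "nat \<Rightarrow> nat set"
    and n :: "nat \<Rightarrow> nat" and d :: "nat \<Rightarrow> real" and p :: real
    and tb :: "nat set \<Rightarrow> (nat \<Rightarrow> real) \<Rightarrow> nat \<Rightarrow> nat" and Sstar :: "nat set"
  assumes nonneg: "\<forall>A. A \<subseteq> {1..m} \<longrightarrow> f A \<ge> 0"
    and submod: "submodular_on {1..m} f"
    and k_pos: "k \<ge> 1"
    and part_nonempty: "\<forall>a\<in>{1..k}. P a \<noteq> {}"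
    and part_disj: "\<forall>a\<in>{1..k}. \<forall>b\<in>{1..k}. a \<noteq> b \<longrightarrow> P a \<inter> P b = {}"
    and part_cover: "(\<Union>a\<in>{1..k}. P a) = {1..m}"
    and budgets: "\<forall>a\<in>{1..k}. n a \<ge> 1"
    and d_pos: "\<forall>a\<in>{1..k}. d a > 0"
    and p: "0 < p" "p < 1"
    and tiebreak: "\<forall>S w t a. a \<in> {1..k} \<longrightarrow> t \<in> P a \<longrightarrow> S \<inter> P a \<noteq> {} \<longrightarrow>
                     tb S w t \<in> S \<inter> P a \<and> (\<forall>x\<in>S \<inter> P a. w (tb S w t) \<le> w x)"
    and Sstar_feas: "Sstar \<subseteq> {1..m}" "\<forall>a\<in>{1..k}. card (Sstar \<inter> P a) \<le> n a"
    and Sstar_opt: "\<forall>S. S \<subseteq> {1..m} \<longrightarrow> (\<forall>a\<in>{1..k}. card (S \<inter> P a) \<le> n a) \<longrightarrow> f S \<le> f Sstar"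
  shows "measure_pmf.expectation (Pi_pmf {1..m} False (\<lambda>_. bernoulli_pmf p))
           (\<lambda>Z. f (alg_output f P k n d tb m Z))
         \<ge> (1 - p) / (MAX a\<in>{1..k}. Q_par p (d a) (n a)) * f Sstar"
proof -
  interpret alg_setting f P k n d tb m
    using submod part_disj part_cover budgets d_pos tiebreak by unfold_locales auto
  define Q where "Q = (MAX a\<in>{1..k}. Q_par p (d a) (n a))"
  have Q1: "Q \<ge> 1" using Q_ge(2)[OF k_pos p] by (simp add: Q_def)
  have B: "(1 - p) * f Sstar \<le> Q * (\<Sum>Z\<in>OmS m. pmf (PIm m p) Z * f (SS Z m))"
    using main_bound[OF k_pos p Sstar_feas nonneg] by (simp add: Q_def)
  have E: "measure_pmf.expectation (Pi_pmf {1..m} False (\<lambda>_. bernoulli_pmf p))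
           (\<lambda>Z. f (alg_output f P k n d tb m Z)) = (\<Sum>Z\<in>OmS m. pmf (PIm m p) Z * f (SS Z m))"
    using E_sum[of m p "\<lambda>Z. f (alg_output f P k n d tb m Z)"] by (simp add: PIm_def out_eq)
  have "(1 - p) / Q * f Sstar = ((1 - p) * f Sstar) / Q" by simp
  also have "\<dots> \<le> (Q * (\<Sum>Z\<in>OmS m. pmf (PIm m p) Z * f (SS Z m))) / Q"
    using B Q1 by (intro divide_right_mono) auto
  also have "\<dots> = (\<Sum>Z\<in>OmS m. pmf (PIm m p) Z * f (SS Z m))" using Q1 by simp
  finally show ?thesis unfolding E Q_def .
qed

end
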